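(* Let $x\in\operatorname{dom}f$ and assume (SH). If moreover the map $t\mapsto f_t(x)$ is lower semicontinuous on $T$, then $\inf_{t\in T}f_t(x)>-\infty$, and consequently for every $\varepsilon>0$, \[ \mathrm{N}_{\operatorname{dom}f}(x)=\Big[\overline{\operatorname{co}}\Big(\bigcup_{t\in T}\partial_\varepsilon f_t(x)\Big)\Big]_\infty . \]
   Context: $X$ is a real separated locally convex space with dual $X^*$ carrying the weak$^*$ topology. $T$ is a nonempty index set, $\{f_t: t\in T\}$ are proper convex lsc functions $X\to\mathbb{R}\cup\{+\infty\}$, $f:=\sup_{t\in T}f_t$. $\partial_\varepsilon g(x)$ is the $\varepsilon$-subdifferential; $\overline{\operatorname{co}}$ is the weak$^*$-closed convex hull; $C_\infty$ is the recession cone of a nonempty closed convex set $C$; $\mathrm{N}_A(x)$ is the normal cone. (SH): $T$ is compact Hausdorff and $t\mapsto f_t(z)$ is upper semicontinuous on $T$ for each $z\in X$. *)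

theory Defs
  imports "HOL-Analysis.Analysis"
begin

definition lcs :: "'a::real_vector topology \<Rightarrow> bool" where
  "lcs \<tau> \<longleftrightarrow> topspace \<tau> = UNIV \<and> Hausdorff_space \<tau>
     \<and> continuous_map (prod_topology \<tau> \<tau>) \<tau> (\<lambda>(x,y). x + y)
     \<and> continuous_map (prod_topology euclideanreal \<tau>) \<tau> (\<lambda>(a,x). a *\<^sub>R x)
     \<and> (\<forall>U. openin \<tau> U \<and> 0 \<in> U \<longrightarrow> (\<exists>V. openin \<tau> V \<and> convex V \<and> 0 \<in> V \<and> V \<subseteq> U))"

definition dual :: "'a::real_vector topology \<Rightarrow> ('a \<Rightarrow> real) set" where
  "dual \<tau> = {\<phi>. linear \<phi> \<and> continuous_map \<tau> euclideanreal \<phi>}"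

definition wstar :: "'a::real_vector topology \<Rightarrow> ('a \<Rightarrow> real) topology" where
  "wstar \<tau> = subtopology (product_topology (\<lambda>_. euclideanreal) UNIV) (dual \<tau>)"

definition fconvex :: "('a \<Rightarrow> real) set \<Rightarrow> bool" where
  "fconvex A \<longleftrightarrow> (\<forall>\<phi>\<in>A. \<forall>\<psi>\<in>A. \<forall>u::real. 0 \<le> u \<and> u \<le> 1 \<longrightarrow> (\<lambda>z. u * \<phi> z + (1 - u) * \<psi> z) \<in> A)"

definition wstar_clco :: "'a::real_vector topology \<Rightarrow> ('a \<Rightarrow> real) set \<Rightarrow> ('a \<Rightarrow> real) set" where
  "wstar_clco \<tau> S = \<Inter>{A. A \<subseteq> dual \<tau> \<and> closedin (wstar \<tau>) A \<and> fconvex A \<and> S \<subseteq> A}"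

definition recession_cone :: "('a \<Rightarrow> real) set \<Rightarrow> ('a \<Rightarrow> real) set" where
  "recession_cone C = {d. \<forall>y\<in>C. \<forall>l::real. l \<ge> 0 \<longrightarrow> (\<lambda>z. y z + l * d z) \<in> C}"

definition normal_cone :: "'a::real_vector topology \<Rightarrow> 'a set \<Rightarrow> 'a \<Rightarrow> ('a \<Rightarrow> real) set" where
  "normal_cone \<tau> A x = {\<phi> \<in> dual \<tau>. \<forall>y\<in>A. \<phi> (y - x) \<le> 0}"

definition edom :: "('a \<Rightarrow> ereal) \<Rightarrow> 'a set" where
  "edom g = {z. g z < \<infinity>}"

definition eps_subdiff :: "'a::real_vector topology \<Rightarrow> real \<Rightarrow> ('a \<Rightarrow> ereal) \<Rightarrow> 'a \<Rightarrow> ('a \<Rightarrow> real) set" where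
  "eps_subdiff \<tau> \<epsilon> g x = {\<phi> \<in> dual \<tau>. \<bar>g x\<bar> \<noteq> \<infinity> \<and>
      (\<forall>y. g y \<ge> g x + ereal (\<phi> (y - x) - \<epsilon>))}"

definition proper_fn :: "('a \<Rightarrow> ereal) \<Rightarrow> bool" where
  "proper_fn g \<longleftrightarrow> (\<forall>z. g z \<noteq> -\<infinity>) \<and> (\<exists>z. g z \<noteq> \<infinity>)"

definition convex_fn :: "('a::real_vector \<Rightarrow> ereal) \<Rightarrow> bool" where
  "convex_fn g \<longleftrightarrow> (\<forall>y z. \<forall>u::real. 0 < u \<and> u < 1 \<longrightarrow>
      g (u *\<^sub>R y + (1 - u) *\<^sub>R z) \<le> ereal u * g y + ereal (1 - u) * g z)"

definition lsc_on :: "'a topology \<Rightarrow> ('a \<Rightarrow> ereal) \<Rightarrow> bool" where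
  "lsc_on \<sigma> g \<longleftrightarrow> (\<forall>c::real. closedin \<sigma> {z \<in> topspace \<sigma>. g z \<le> ereal c})"

definition usc_on :: "'a topology \<Rightarrow> ('a \<Rightarrow> ereal) \<Rightarrow> bool" where
  "usc_on \<sigma> g \<longleftrightarrow> (\<forall>c::real. openin \<sigma> {z \<in> topspace \<sigma>. g z < ereal c})"

end

theory Submission
  imports Defs "HOL-Library.Function_Algebras"
begin

definition sublinear :: "('v::real_vector \<Rightarrow> real) \<Rightarrow> bool" where
 "sublinear p \<longleftrightarrow> (\<forall>x y. p (x+y) \<le> p x + p y) \<and> (\<forall>c x. c \<ge> 0 \<longrightarrow> p (c *\<^sub>R x) = c * p x)"

definition hbgood :: "('v::real_vector \<Rightarrow> real) \<Rightarrow> 'v \<Rightarrow> ('v \<times> real) set \<Rightarrow> bool" where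
 "hbgood p v0 G \<longleftrightarrow> (\<forall>a r r'. (a,r)\<in>G \<longrightarrow> (a,r')\<in>G \<longrightarrow> r = r') \<and> (v0, p v0) \<in> G
   \<and> (\<forall>a r b s. (a,r)\<in>G \<longrightarrow> (b,s)\<in>G \<longrightarrow> (a+b, r+s)\<in>G)
   \<and> (\<forall>a r c. (a,r)\<in>G \<longrightarrow> (c *\<^sub>R a, c*r)\<in>G) \<and> (\<forall>a r. (a,r)\<in>G \<longrightarrow> r \<le> p a)"

lemma hbgoodD:
  assumes "hbgood p v0 G"
  shows hbgood_uniq: "\<And>a r r'. (a,r)\<in>G \<Longrightarrow> (a,r')\<in>G \<Longrightarrow> r = r'"
    and hbgood_v0: "(v0, p v0) \<in> G"
    and hbgood_add: "\<And>a r b s. (a,r)\<in>G \<Longrightarrow> (b,s)\<in>G \<Longrightarrow> (a+b, r+s)\<in>G"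
    and hbgood_sc: "\<And>a r c. (a,r)\<in>G \<Longrightarrow> (c *\<^sub>R a, c*r)\<in>G"
    and hbgood_dom: "\<And>a r. (a,r)\<in>G \<Longrightarrow> r \<le> p a"
  using assms unfolding hbgood_def by blast+

lemma sublinear_0: "sublinear p \<Longrightarrow> p 0 = 0"
  unfolding sublinear_def by (metis mult_zero_left order_refl scaleR_zero_left)

lemma sublinear_neg: assumes "sublinear p" shows "- p (-x) \<le> p x"
proof -
  have "p 0 \<le> p x + p (-x)" using assms unfolding sublinear_def by (metis add.right_inverse)
  thus ?thesis using sublinear_0[OF assms] by simp
qed

lemma hb_init:
  assumes "sublinear p"
  shows "hbgood p v0 {(t *\<^sub>R v0, t * p v0) | t. True}" (is "hbgood p v0 ?G")
proof -
  have dom: "t * p v0 \<le> p (t *\<^sub>R v0)" for t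
  proof (cases "t \<ge> 0")
    case True thus ?thesis using assms unfolding sublinear_def by simp
  next
    case False
    have "p (t *\<^sub>R v0) = p ((-t) *\<^sub>R (-v0))" by simp
    also have "\<dots> = (-t) * p (-v0)"
    proof -
      have "-t \<ge> 0" using False by simp
      have H: "\<forall>c x. c \<ge> 0 \<longrightarrow> p (c *\<^sub>R x) = c * p x" using assms unfolding sublinear_def by blast
      show ?thesis by (rule H[rule_format, OF \<open>-t \<ge> 0\<close>])
    qed
    finally have "p (t *\<^sub>R v0) = (-t) * p (-v0)" .
    moreover have "- p (-v0) \<le> p v0" by (rule sublinear_neg[OF assms])
    ultimately have "(-t) * (- p v0) \<le> p (t *\<^sub>R v0)"
      using mult_left_mono[of "- p v0" "p (-v0)" "-t"] False by simp
    thus ?thesis by simp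
  qed
  have uniq: "t * p v0 = t' * p v0" if "t *\<^sub>R v0 = t' *\<^sub>R v0" for t t'
  proof (cases "v0 = 0")
    case True thus ?thesis using sublinear_0[OF assms] by simp
  next
    case False thus ?thesis using that by (simp add: scaleR_cancel_right)
  qed
  show ?thesis unfolding hbgood_def
  proof (intro conjI allI impI)
    fix a r r' assume "(a,r)\<in>?G" "(a,r')\<in>?G" thus "r = r'" using uniq by auto
  next
    show "(v0, p v0) \<in> ?G" by (auto intro!: exI[of _ 1])
  next
    fix a r b s assume "(a,r)\<in>?G" "(b,s)\<in>?G"
    then obtain t1 t2 where "a = t1 *\<^sub>R v0" "r = t1 * p v0" "b = t2 *\<^sub>R v0" "s = t2 * p v0" by blast
    thus "(a+b, r+s)\<in>?G"
      by (auto simp: scaleR_add_left[symmetric] distrib_right intro!: exI[of _ "t1+t2"])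
  next
    fix a r c assume "(a,r)\<in>?G"
    then obtain t1 where "a = t1 *\<^sub>R v0" "r = t1 * p v0" by blast
    thus "(c *\<^sub>R a, c*r)\<in>?G" by (auto intro!: exI[of _ "c*t1"])
  next
    fix a r assume "(a,r)\<in>?G" thus "r \<le> p a" using dom by auto
  qed
qed

lemma hb_chain:
  assumes "sublinear p" "C \<in> chains {G. hbgood p v0 G}"
  shows "\<exists>U\<in>{G. hbgood p v0 G}. \<forall>X\<in>C. X \<subseteq> U"
proof (cases "C = {}")
  case True thus ?thesis using hb_init[OF assms(1)] by blast
next
  case False
  have CG: "\<And>G. G \<in> C \<Longrightarrow> hbgood p v0 G" using assms(2) by (auto simp: chains_def)
  have ch: "\<And>G H. G \<in> C \<Longrightarrow> H \<in> C \<Longrightarrow> G \<subseteq> H \<or> H \<subseteq> G"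
    using assms(2) by (auto simp: chains_def chain_subset_def)
  have two: "\<exists>K\<in>C. P \<in> K \<and> Q \<in> K" if PP: "P \<in> \<Union>C" and QQ: "Q \<in> \<Union>C" for P Q
  proof -
    obtain G where G: "G\<in>C" "P\<in>G" using PP by blast
    obtain H where H: "H\<in>C" "Q\<in>H" using QQ by blast
    show ?thesis
    proof (cases "G \<subseteq> H")
      case True thus ?thesis using G H by blast
    next
      case False hence "H \<subseteq> G" using ch[OF G(1) H(1)] by blast
      thus ?thesis using G H by blast
    qed
  qed
  have "hbgood p v0 (\<Union>C)" unfolding hbgood_def
  proof (intro conjI allI impI)
    fix a r r' assume "(a,r)\<in>\<Union>C" "(a,r')\<in>\<Union>C"
    then obtain K where K: "K\<in>C" "(a,r)\<in>K" "(a,r')\<in>K" using two[of "(a,r)" "(a,r')"] by blast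
    show "r = r'" using hbgood_uniq[OF CG[OF K(1)] K(2,3)] .
  next
    obtain K where K: "K \<in> C" using False by auto
    show "(v0, p v0) \<in> \<Union>C" using hbgood_v0[OF CG[OF K]] K by blast
  next
    fix a r b s assume "(a,r)\<in>\<Union>C" "(b,s)\<in>\<Union>C"
    then obtain K where K: "K\<in>C" "(a,r)\<in>K" "(b,s)\<in>K" using two[of "(a,r)" "(b,s)"] by blast
    show "(a+b, r+s)\<in>\<Union>C" using hbgood_add[OF CG[OF K(1)] K(2,3)] K(1) by blast
  next
    fix a r c assume "(a,r)\<in>\<Union>C"
    then obtain K where K: "K\<in>C" "(a,r)\<in>K" by blast
    show "(c *\<^sub>R a, c*r)\<in>\<Union>C" using hbgood_sc[OF CG[OF K(1)] K(2)] K(1) by blast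
  next
    fix a r assume "(a,r)\<in>\<Union>C"
    then obtain K where K: "K\<in>C" "(a,r)\<in>K" by blast
    show "r \<le> p a" using hbgood_dom[OF CG[OF K(1)] K(2)] .
  qed
  thus ?thesis by blast
qed

lemma hb_extend:
  assumes "sublinear p" "hbgood p v0 G" "\<forall>r. (v,r) \<notin> G"
  shows "\<exists>G'. hbgood p v0 G' \<and> G \<subseteq> G' \<and> G' \<noteq> G"
proof -
  let ?D = "fst ` G"
  have G_add: "(a+b, r+s)\<in>G" if "(a,r)\<in>G" "(b,s)\<in>G" for a b r s
    using hbgood_add[OF assms(2) that] .
  have G_sc: "(c *\<^sub>R a, c*r)\<in>G" if "(a,r)\<in>G" for a r c
    using hbgood_sc[OF assms(2) that] .
  have G_dom: "r \<le> p a" if "(a,r)\<in>G" for a r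
    using hbgood_dom[OF assms(2) that] .
  have G_uniq: "r = r'" if "(a,r)\<in>G" "(a,r')\<in>G" for a r r'
    using hbgood_uniq[OF assms(2) that] .
  have inD: "a \<in> ?D" if "(a,r)\<in>G" for a r
  proof -
    have "a = fst (a,r)" by simp
    thus ?thesis using that by (rule image_eqI)
  qed
  define f where "f a = (THE r. (a,r) \<in> G)" for a
  have fG: "(a, f a) \<in> G" if "a \<in> ?D" for a
  proof -
    from that obtain q where q: "a = fst q" "q \<in> G" by (rule imageE)
    hence ar: "(a, snd q) \<in> G" by simp
    have u: "\<And>r. (a,r) \<in> G \<Longrightarrow> r = snd q" using G_uniq[OF _ ar] by blast
    have "(THE r. (a,r) \<in> G) = snd q"
      by (rule the_equality[where P="\<lambda>r. (a,r) \<in> G", OF ar u])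
    thus ?thesis unfolding f_def using ar by simp
  qed
  have funiq: "r = f a" if "(a,r)\<in>G" for a r
    using G_uniq[OF that fG[OF inD[OF that]]] .
  have v0D: "v0 \<in> ?D" using inD[OF hbgood_v0[OF assms(2)]] .
  have key: "f a - p (a - v) \<le> p (b + v) - f b" if "a \<in> ?D" "b \<in> ?D" for a b
  proof -
    have "(a+b, f a + f b) \<in> G" using G_add[OF fG[OF that(1)] fG[OF that(2)]] .
    hence "f a + f b \<le> p (a+b)" using G_dom by blast
    also have "p (a+b) = p ((a - v) + (b + v))" by (simp add: algebra_simps)
    also have "\<dots> \<le> p (a - v) + p (b + v)" using assms(1) unfolding sublinear_def by blast
    finally show ?thesis by simp
  qed
  define c where "c = Sup ((\<lambda>a. f a - p (a - v)) ` ?D)"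
  have c1: "f a - p (a - v) \<le> c" if "a \<in> ?D" for a
  proof -
    have "bdd_above ((\<lambda>a. f a - p (a - v)) ` ?D)"
      by (rule bdd_aboveI2[of _ _ "p (v0 + v) - f v0"]) (rule key[OF _ v0D])
    thus ?thesis unfolding c_def by (rule cSup_upper[OF imageI[OF that]])
  qed
  have c2: "c \<le> p (b + v) - f b" if "b \<in> ?D" for b
    unfolding c_def using v0D by (intro cSup_least) (auto intro: key[OF _ that])
  define G' where "G' = (\<lambda>((a,r),t). (a + t *\<^sub>R v, r + t * c)) ` (G \<times> UNIV)"
  have G'I: "(a + t *\<^sub>R v, r + t * c) \<in> G'" if "(a,r)\<in>G" for a r t
    unfolding G'_def using that by (intro image_eqI[of _ _ "((a,r),t)"]) auto
  have G'E: "\<exists>a r t. (a,r)\<in>G \<and> q = (a + t *\<^sub>R v, r + t * c)" if "q \<in> G'" for q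
    using that unfolding G'_def by auto
  have GG': "G \<subseteq> G'"
  proof
    fix q assume "q \<in> G"
    then obtain a r where q: "q = (a,r)" "(a,r)\<in>G" by (cases q) auto
    show "q \<in> G'" using G'I[OF q(2), of 0] q(1) by simp
  qed
  have "(0 *\<^sub>R v0 + 1 *\<^sub>R v, 0 * f v0 + 1 * c) \<in> G'" by (rule G'I[OF G_sc[OF fG[OF v0D]]])
  hence "(v, c) \<in> G'" by simp
  hence neq: "G' \<noteq> G" using assms(3) by blast
  have dom': "r + t * c \<le> p (a + t *\<^sub>R v)" if "(a,r)\<in>G" for a r t
  proof -
    consider "t > 0" | "t = 0" | "t < 0" by linarith
    thus ?thesis
    proof cases
      case 1
      have m: "(inverse t *\<^sub>R a, inverse t * r) \<in> G" using G_sc that by blast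
      have "c \<le> p (inverse t *\<^sub>R a + v) - f (inverse t *\<^sub>R a)" using c2[OF inD[OF m]] .
      also have "f (inverse t *\<^sub>R a) = inverse t * r" using funiq[OF m] by simp
      finally have "c \<le> p (inverse t *\<^sub>R a + v) - inverse t * r" .
      hence "t * c \<le> t * (p (inverse t *\<^sub>R a + v) - inverse t * r)" using 1 by simp
      moreover have "t * (p (inverse t *\<^sub>R a + v) - inverse t * r) = t * p (inverse t *\<^sub>R a + v) - r"
        using 1 by (simp add: right_diff_distrib mult.assoc[symmetric])
      ultimately have "t * c \<le> t * p (inverse t *\<^sub>R a + v) - r" by simp
      also have "t * p (inverse t *\<^sub>R a + v) = p (t *\<^sub>R (inverse t *\<^sub>R a + v))"
        using assms(1) 1 unfolding sublinear_def by simp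
      also have "t *\<^sub>R (inverse t *\<^sub>R a + v) = a + t *\<^sub>R v" using 1 by (simp add: scaleR_add_right)
      finally show ?thesis by simp
    next
      case 2 thus ?thesis using G_dom that by simp
    next
      case 3
      define u where "u = -t"
      have u: "u > 0" using 3 u_def by simp
      have m: "(inverse u *\<^sub>R a, inverse u * r) \<in> G" using G_sc that by blast
      have "f (inverse u *\<^sub>R a) - p (inverse u *\<^sub>R a - v) \<le> c" using c1[OF inD[OF m]] .
      also have "f (inverse u *\<^sub>R a) = inverse u * r" using funiq[OF m] by simp
      finally have "inverse u * r - p (inverse u *\<^sub>R a - v) \<le> c" .
      hence "u * (inverse u * r - p (inverse u *\<^sub>R a - v)) \<le> u * c" using u by simp
      hence "r - u * p (inverse u *\<^sub>R a - v) \<le> u * c" using u by (simp add: right_diff_distrib mult.assoc[symmetric])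
      also have "u * p (inverse u *\<^sub>R a - v) = p (u *\<^sub>R (inverse u *\<^sub>R a - v))"
        using assms(1) u unfolding sublinear_def by simp
      also have "u *\<^sub>R (inverse u *\<^sub>R a - v) = a + t *\<^sub>R v" using u u_def by (simp add: scaleR_diff_right)
      finally show ?thesis using u_def by simp
    qed
  qed
  have inj: "t = t' \<and> a = a'" if eq: "a + t *\<^sub>R v = a' + t' *\<^sub>R v" and r: "(a, r)\<in>G" and r': "(a', r')\<in>G"
    for a a' t t' r r'
  proof (cases "t = t'")
    case True thus ?thesis using eq by simp
  next
    case False
    have e2: "(t - t') *\<^sub>R v = a' - a" using eq by (simp add: algebra_simps)
    have "(a' + (-1) *\<^sub>R a, r' + (-1) * r) \<in> G" using G_add[OF r' G_sc[OF r]] .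
    hence "(inverse (t - t') *\<^sub>R (a' + (-1) *\<^sub>R a), inverse (t - t') * (r' + (-1) * r)) \<in> G"
      by (rule G_sc)
    moreover have "inverse (t - t') *\<^sub>R (a' + (-1) *\<^sub>R a) = v"
    proof -
      have "inverse (t - t') *\<^sub>R (a' + (-1) *\<^sub>R a) = inverse (t - t') *\<^sub>R ((t - t') *\<^sub>R v)"
        using e2 by simp
      also have "\<dots> = v" using False by simp
      finally show ?thesis .
    qed
    ultimately show ?thesis using assms(3) by auto
  qed
  have "hbgood p v0 G'" unfolding hbgood_def
  proof (intro conjI allI impI)
    fix a r r' assume A1: "(a,r)\<in>G'" and A2: "(a,r')\<in>G'"
    obtain a1 r1 t1 where 1: "(a1,r1)\<in>G" "(a,r) = (a1 + t1 *\<^sub>R v, r1 + t1 * c)" using G'E[OF A1] by blast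
    obtain a2 r2 t2 where 2: "(a2,r2)\<in>G" "(a,r') = (a2 + t2 *\<^sub>R v, r2 + t2 * c)" using G'E[OF A2] by blast
    have "a1 + t1 *\<^sub>R v = a2 + t2 *\<^sub>R v" using 1(2) 2(2) by simp
    hence "t1 = t2 \<and> a1 = a2" using inj 1(1) 2(1) by blast
    hence "r1 = r2" using G_uniq 1(1) 2(1) by blast
    thus "r = r'" using 1(2) 2(2) \<open>t1 = t2 \<and> a1 = a2\<close> by simp
  next
    show "(v0, p v0) \<in> G'" using GG' hbgood_v0[OF assms(2)] by blast
  next
    fix a r b s assume A1: "(a,r)\<in>G'" and A2: "(b,s)\<in>G'"
    obtain a1 r1 t1 where 1: "(a1,r1)\<in>G" "(a,r) = (a1 + t1 *\<^sub>R v, r1 + t1 * c)" using G'E[OF A1] by blast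
    obtain a2 r2 t2 where 2: "(a2,r2)\<in>G" "(b,s) = (a2 + t2 *\<^sub>R v, r2 + t2 * c)" using G'E[OF A2] by blast
    have "((a1+a2) + (t1+t2) *\<^sub>R v, (r1+r2) + (t1+t2)*c) \<in> G'" using G'I[OF G_add[OF 1(1) 2(1)]] .
    moreover have "(a1+a2) + (t1+t2) *\<^sub>R v = a + b" "(r1+r2) + (t1+t2)*c = r + s"
      using 1(2) 2(2) by (simp_all add: algebra_simps)
    ultimately show "(a+b, r+s)\<in>G'" by simp
  next
    fix a r d assume A1: "(a,r)\<in>G'"
    obtain a1 r1 t1 where 1: "(a1,r1)\<in>G" "(a,r) = (a1 + t1 *\<^sub>R v, r1 + t1 * c)" using G'E[OF A1] by blast
    have "(d *\<^sub>R a1 + (d*t1) *\<^sub>R v, d*r1 + (d*t1)*c) \<in> G'" using G'I[OF G_sc[OF 1(1)]] .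
    moreover have "d *\<^sub>R a1 + (d*t1) *\<^sub>R v = d *\<^sub>R a" "d*r1 + (d*t1)*c = d * r"
      using 1(2) by (simp_all add: algebra_simps)
    ultimately show "(d *\<^sub>R a, d*r)\<in>G'" by simp
  next
    fix a r assume A1: "(a,r)\<in>G'"
    obtain a1 r1 t1 where 1: "(a1,r1)\<in>G" "(a,r) = (a1 + t1 *\<^sub>R v, r1 + t1 * c)" using G'E[OF A1] by blast
    show "r \<le> p a" using dom'[OF 1(1), of t1] 1(2) by simp
  qed
  thus ?thesis using GG' neq by blast
qed

theorem hahn_banach_sublinear:
  assumes "sublinear (p :: 'v::real_vector \<Rightarrow> real)"
  shows "\<exists>F. linear F \<and> (\<forall>x. F x \<le> p x) \<and> F v0 = p v0"
proof -
  obtain M where M: "M \<in> {G. hbgood p v0 G}" "\<forall>X\<in>{G. hbgood p v0 G}. M \<subseteq> X \<longrightarrow> X = M"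
    using Zorn_Lemma2[of "{G. hbgood p v0 G}"] hb_chain[OF assms] by blast
  have good: "hbgood p v0 M" using M by simp
  have tot: "\<exists>r. (v,r) \<in> M" for v
    using hb_extend[OF assms good, of v] M(2) by blast
  define F where "F v = (THE r. (v,r) \<in> M)" for v
  have FM: "(v, F v) \<in> M" for v
  proof -
    obtain r where r: "(v,r)\<in>M" using tot by blast
    have "\<And>r'. (v,r')\<in>M \<Longrightarrow> r' = r" using hbgood_uniq[OF good r] by blast
    thus ?thesis using r unfolding F_def by (metis (mono_tags, lifting) theI)
  qed
  have Fu: "r = F v" if "(v,r)\<in>M" for v r using hbgood_uniq[OF good that FM] .
  have M_add: "(a+b, r+s)\<in>M" if "(a,r)\<in>M" "(b,s)\<in>M" for a b r s
    using hbgood_add[OF good that] .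
  have M_sc: "(c *\<^sub>R a, c*r)\<in>M" if "(a,r)\<in>M" for a r c
    using hbgood_sc[OF good that] .
  have M_dom: "r \<le> p a" if "(a,r)\<in>M" for a r
    using hbgood_dom[OF good that] .
  have M_v0: "(v0, p v0) \<in> M" using hbgood_v0[OF good] .
  have "linear F"
  proof (rule linearI)
    fix b1 b2 show "F (b1 + b2) = F b1 + F b2"
      using Fu[OF M_add[OF FM FM]] by simp
  next
    fix r b show "F (r *\<^sub>R b) = r *\<^sub>R F b"
      using Fu[OF M_sc[OF FM]] by simp
  qed
  moreover have "F x \<le> p x" for x using M_dom FM by blast
  moreover have "F v0 = p v0" using Fu[OF M_v0] by simp
  ultimately show ?thesis by blast
qed

definition mgauge_set :: "'v::real_vector set \<Rightarrow> 'v \<Rightarrow> real set" where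
  "mgauge_set D v = {t. t > 0 \<and> inverse t *\<^sub>R v \<in> D}"

definition mgauge :: "'v::real_vector set \<Rightarrow> 'v \<Rightarrow> real" where
  "mgauge D v = Inf (mgauge_set D v)"

locale gauge_ctx =
  fixes D :: "'v::real_vector set"
  assumes cvx: "convex D"
    and absorb: "\<And>v. \<exists>t>0. t *\<^sub>R v \<in> D"
begin

lemma zero_in: "0 \<in> D" using absorb[of 0] by auto

lemma gs_ne: "mgauge_set D v \<noteq> {}"
proof -
  obtain t where t: "t > 0" "t *\<^sub>R v \<in> D" using absorb by blast
  hence "inverse t \<in> mgauge_set D v" unfolding mgauge_set_def by simp
  thus ?thesis by blast
qed

lemma gs_bdd: "bdd_below (mgauge_set D v)"
  unfolding mgauge_set_def by (rule bdd_belowI[of _ 0]) auto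

lemma gs_up: assumes "t \<in> mgauge_set D v" "t \<le> t'" shows "t' \<in> mgauge_set D v"
proof -
  have t: "t > 0" "inverse t *\<^sub>R v \<in> D" using assms(1) unfolding mgauge_set_def by auto
  have t': "t' > 0" using t assms(2) by simp
  have "(t / t') *\<^sub>R (inverse t *\<^sub>R v) + (1 - t / t') *\<^sub>R 0 \<in> D"
    using t t' assms(2) by (intro convexD[OF cvx t(2) zero_in]) (auto simp: field_simps)
  moreover have "(t / t') * inverse t = inverse t'" using t t' by (simp add: field_simps)
  hence "(t / t') *\<^sub>R (inverse t *\<^sub>R v) + (1 - t / t') *\<^sub>R 0 = inverse t' *\<^sub>R v"
    by simp
  ultimately have "inverse t' *\<^sub>R v \<in> D" by (simp only:)
  thus ?thesis using t' unfolding mgauge_set_def by simp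
qed

lemma gauge_nonneg: "mgauge D v \<ge> 0"
  unfolding mgauge_def using gs_ne by (rule cInf_greatest) (auto simp: mgauge_set_def)

lemma gauge_le: "t \<in> mgauge_set D v \<Longrightarrow> mgauge D v \<le> t"
  unfolding mgauge_def by (rule cInf_lower[OF _ gs_bdd])

lemma gauge_ge: "(\<And>t. t \<in> mgauge_set D v \<Longrightarrow> c \<le> t) \<Longrightarrow> c \<le> mgauge D v"
  unfolding mgauge_def using gs_ne by (rule cInf_greatest) auto

lemma gauge_add: "mgauge D (u + v) \<le> mgauge D u + mgauge D v"
proof -
  have st: "s + t \<in> mgauge_set D (u + v)" if s: "s \<in> mgauge_set D u" and t: "t \<in> mgauge_set D v" for s t
  proof -
    have s': "s > 0" "inverse s *\<^sub>R u \<in> D" and t': "t > 0" "inverse t *\<^sub>R v \<in> D"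
      using s t unfolding mgauge_set_def by auto
    have "(s / (s+t)) *\<^sub>R (inverse s *\<^sub>R u) + (1 - s / (s+t)) *\<^sub>R (inverse t *\<^sub>R v) \<in> D"
    proof (rule convexD[OF cvx s'(2) t'(2)])
      show "0 \<le> s / (s + t)" using s' t' by simp
      show "0 \<le> 1 - s / (s + t)" using s' t' by (simp add: field_simps)
    qed simp
    moreover have "(s / (s+t)) *\<^sub>R (inverse s *\<^sub>R u) + (1 - s / (s+t)) *\<^sub>R (inverse t *\<^sub>R v)
       = inverse (s + t) *\<^sub>R (u + v)"
      using s' t' by (simp add: field_simps scaleR_add_right)
    ultimately show ?thesis using s' t' unfolding mgauge_set_def by simp
  qed
  have "mgauge D (u+v) - s \<le> mgauge D v" if s: "s \<in> mgauge_set D u" for s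
    using gauge_le[OF st[OF s]] by (intro gauge_ge) (simp add: algebra_simps)
  hence "mgauge D (u+v) - mgauge D v \<le> mgauge D u"
    by (intro gauge_ge) (simp add: algebra_simps)
  thus ?thesis by simp
qed

lemma gauge_zero: "mgauge D 0 = 0"
proof -
  have "mgauge D 0 \<le> e" if "e > 0" for e
    using that zero_in by (intro gauge_le) (simp add: mgauge_set_def)
  hence "mgauge D 0 \<le> 0" by (meson dense not_le)
  thus ?thesis using gauge_nonneg[of 0] by simp
qed

lemma gauge_scale: assumes "c > 0" shows "mgauge D (c *\<^sub>R v) = c * mgauge D v"
proof -
  have iff: "t \<in> mgauge_set D (c *\<^sub>R v) \<longleftrightarrow> t / c \<in> mgauge_set D v" for t
    using assms by (simp add: mgauge_set_def field_simps)
  have 1: "mgauge D (c *\<^sub>R v) \<le> c * mgauge D v"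
  proof -
    have "mgauge D (c *\<^sub>R v) / c \<le> t" if "t \<in> mgauge_set D v" for t
    proof -
      have "c * t \<in> mgauge_set D (c *\<^sub>R v)" using iff[of "c*t"] that assms by simp
      hence "mgauge D (c *\<^sub>R v) \<le> c * t" by (rule gauge_le)
      thus ?thesis using assms by (simp add: field_simps)
    qed
    hence "mgauge D (c *\<^sub>R v) / c \<le> mgauge D v" by (rule gauge_ge)
    thus ?thesis using assms by (simp add: field_simps)
  qed
  have 2: "c * mgauge D v \<le> mgauge D (c *\<^sub>R v)"
  proof -
    have "c * mgauge D v \<le> t" if "t \<in> mgauge_set D (c *\<^sub>R v)" for t
    proof -
      have "mgauge D v \<le> t / c" using iff that by (intro gauge_le) simp
      thus ?thesis using assms by (simp add: field_simps)
    qed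
    thus ?thesis by (rule gauge_ge)
  qed
  show ?thesis using 1 2 by simp
qed

lemma gauge_sublinear: "sublinear (mgauge D)"
  unfolding sublinear_def
proof (intro conjI allI impI)
  fix x y show "mgauge D (x + y) \<le> mgauge D x + mgauge D y" by (rule gauge_add)
next
  fix c :: real and x assume "c \<ge> 0"
  thus "mgauge D (c *\<^sub>R x) = c * mgauge D x"
    using gauge_scale[of c x] gauge_zero by (cases "c = 0") auto
qed

end

lemma algebraic_separation:
  fixes D :: "'v::real_vector set"
  assumes cvx: "convex D" and absorb: "\<And>v. \<exists>t>0. t *\<^sub>R v \<in> D"
    and aopen: "\<And>d. d \<in> D \<Longrightarrow> \<exists>\<delta>>0. (1 + \<delta>) *\<^sub>R d \<in> D"
    and v1: "v1 \<notin> D"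
  shows "\<exists>F::'v \<Rightarrow> real. linear F \<and> (\<forall>d\<in>D. F d < 1) \<and> F v1 \<ge> 1"
proof -
  interpret gauge_ctx D using cvx absorb by unfold_locales auto
  obtain F where F: "linear F" "\<And>x. F x \<le> mgauge D x" "F v1 = mgauge D v1"
    using hahn_banach_sublinear[OF gauge_sublinear, of v1] by blast
  have "F d < 1" if d: "d \<in> D" for d
  proof -
    obtain \<delta> where \<delta>: "\<delta> > 0" "(1 + \<delta>) *\<^sub>R d \<in> D" using aopen[OF d] by blast
    have "inverse (1 + \<delta>) \<in> mgauge_set D d" using \<delta> unfolding mgauge_set_def by simp
    hence "mgauge D d \<le> inverse (1 + \<delta>)" by (rule gauge_le)
    also have "\<dots> < 1" using \<delta> by (simp add: field_simps)
    finally show ?thesis using F(2)[of d] by simp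
  qed
  moreover have "mgauge D v1 \<ge> 1"
  proof (rule ccontr)
    assume "\<not> mgauge D v1 \<ge> 1"
    hence "Inf (mgauge_set D v1) < 1" unfolding mgauge_def by simp
    then obtain t where t: "t \<in> mgauge_set D v1" "t < 1" using cInf_lessD[OF gs_ne] by blast
    hence "1 \<in> mgauge_set D v1" using gs_up by simp
    thus False using v1 unfolding mgauge_set_def by simp
  qed
  ultimately have "\<forall>d\<in>D. F d < 1" "F v1 \<ge> 1" using F(3) by auto
  thus ?thesis using F(1) by blast
qed

locale lcs_ctx =
  fixes \<tau> :: "'a::real_vector topology"
  assumes lcs: "lcs \<tau>"
begin

lemma top: "topspace \<tau> = UNIV" using lcs unfolding lcs_def by blast
lemma add_cont: "continuous_map (prod_topology \<tau> \<tau>) \<tau> (\<lambda>(x,y). x + y)" using lcs unfolding lcs_def by blast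
lemma sc_cont: "continuous_map (prod_topology euclideanreal \<tau>) \<tau> (\<lambda>(a,x). a *\<^sub>R x)" using lcs unfolding lcs_def by blast
lemma loc_cvx: "openin \<tau> U \<Longrightarrow> 0 \<in> U \<Longrightarrow> \<exists>V. openin \<tau> V \<and> convex V \<and> 0 \<in> V \<and> V \<subseteq> U"
  using lcs unfolding lcs_def by blast

lemma transl_cont: "continuous_map \<tau> \<tau> (\<lambda>y. y + a)"
proof -
  have "continuous_map \<tau> (prod_topology \<tau> \<tau>) (\<lambda>y. (y, a))"
    by (intro continuous_map_pairedI) (auto simp: top)
  from continuous_map_compose[OF this add_cont] show ?thesis by (simp add: o_def)
qed

lemma scale_cont: "continuous_map \<tau> \<tau> (\<lambda>y. c *\<^sub>R y)"
proof -
  have "continuous_map \<tau> (prod_topology euclideanreal \<tau>) (\<lambda>y. (c, y))"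
    by (intro continuous_map_pairedI) auto
  from continuous_map_compose[OF this sc_cont] show ?thesis by (simp add: o_def)
qed

lemma ray_cont: "continuous_map euclideanreal \<tau> (\<lambda>c. c *\<^sub>R w)"
proof -
  have "continuous_map euclideanreal (prod_topology euclideanreal \<tau>) (\<lambda>c. (c, w))"
    by (intro continuous_map_pairedI) (auto simp: top)
  from continuous_map_compose[OF this sc_cont] show ?thesis by (simp add: o_def)
qed

lemma open_pre: "continuous_map \<tau> \<tau> f \<Longrightarrow> openin \<tau> U \<Longrightarrow> openin \<tau> {y. f y \<in> U}"
  using openin_continuous_map_preimage[of \<tau> \<tau> f U] by (simp add: top)

lemma open_transl: "openin \<tau> U \<Longrightarrow> openin \<tau> {y. y + a \<in> U}"
  by (rule open_pre[OF transl_cont])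

lemma open_scale: "openin \<tau> U \<Longrightarrow> openin \<tau> {y. c *\<^sub>R y \<in> U}"
  by (rule open_pre[OF scale_cont])

lemma nbhd_absorb:
  assumes "openin \<tau> U" "0 \<in> U"
  shows "\<exists>e>0. \<forall>c. \<bar>c\<bar> < e \<longrightarrow> c *\<^sub>R w \<in> U"
proof -
  have "openin euclideanreal {c \<in> topspace euclideanreal. c *\<^sub>R w \<in> U}"
    by (rule openin_continuous_map_preimage[OF ray_cont assms(1)])
  hence o: "open {c. c *\<^sub>R w \<in> U}" by simp
  have "(0::real) \<in> {c. c *\<^sub>R w \<in> U}" using assms(2) by simp
  then obtain e where e: "e > 0" "ball 0 e \<subseteq> {c. c *\<^sub>R w \<in> U}"
    using o open_contains_ball by blast
  thus ?thesis by (intro exI[of _ e]) (auto simp: dist_real_def)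
qed

lemma nbhd_absorb_pos:
  assumes "openin \<tau> U" "0 \<in> U"
  shows "\<exists>t>0. t *\<^sub>R w \<in> U"
proof -
  obtain e where "e > 0" "\<forall>c. \<bar>c\<bar> < e \<longrightarrow> c *\<^sub>R w \<in> U" using nbhd_absorb[OF assms] by blast
  thus ?thesis by (intro exI[of _ "e/2"]) auto
qed

lemma sym_cvx_nbhd:
  assumes "openin \<tau> U" "0 \<in> U"
  shows "\<exists>V. openin \<tau> V \<and> convex V \<and> 0 \<in> V \<and> V \<subseteq> U \<and> (\<forall>v\<in>V. -v \<in> V)"
proof -
  obtain V0 where V0: "openin \<tau> V0" "convex V0" "0 \<in> V0" "V0 \<subseteq> U" using loc_cvx[OF assms] by blast
  define V where "V = V0 \<inter> {y. (-1) *\<^sub>R y \<in> V0}"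
  have "openin \<tau> V" unfolding V_def by (rule openin_Int[OF V0(1) open_scale[OF V0(1)]])
  moreover have "convex V" unfolding V_def
  proof (intro convex_Int V0)
    show "convex {y. (-1) *\<^sub>R y \<in> V0}"
    proof (rule convexI)
      fix x y u v assume xy: "x \<in> {y. (-1) *\<^sub>R y \<in> V0}" "y \<in> {y. (-1) *\<^sub>R y \<in> V0}"
        and uv: "0 \<le> (u::real)" "0 \<le> v" "u + v = 1"
      have "u *\<^sub>R ((-1) *\<^sub>R x) + v *\<^sub>R ((-1) *\<^sub>R y) \<in> V0"
        using xy uv by (intro convexD[OF V0(2)]) auto
      thus "u *\<^sub>R x + v *\<^sub>R y \<in> {y. (-1) *\<^sub>R y \<in> V0}" by (simp add: scaleR_add_right)
    qed
  qed
  moreover have "0 \<in> V" using V0 unfolding V_def by simp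
  moreover have "V \<subseteq> U" using V0 unfolding V_def by auto
  moreover have "\<forall>v\<in>V. -v \<in> V" unfolding V_def by auto
  ultimately show ?thesis by blast
qed

lemma bounded_linear_cont:
  assumes lin: "linear s" and W: "openin \<tau> W" "0 \<in> W" and bd: "\<And>w. w \<in> W \<Longrightarrow> \<bar>s w\<bar> \<le> K"
  shows "continuous_map \<tau> euclideanreal s"
proof -
  have K: "K \<ge> 0" using bd[OF W(2)] by simp
  have "openin \<tau> {x \<in> topspace \<tau>. s x \<in> U}" if U: "open U" for U
  proof (subst openin_subopen, intro ballI)
    fix y0 assume "y0 \<in> {x \<in> topspace \<tau>. s x \<in> U}"
    hence "s y0 \<in> U" by simp
    then obtain e where e: "e > 0" "ball (s y0) e \<subseteq> U" using U open_contains_ball by blast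
    define \<delta> where "\<delta> = e / (K + 1)"
    have \<delta>: "\<delta> > 0" using e K unfolding \<delta>_def by simp
    define T where "T = {y. inverse \<delta> *\<^sub>R (y + (- y0)) \<in> W}"
    have "openin \<tau> T"
    proof -
      have "openin \<tau> {y. inverse \<delta> *\<^sub>R y \<in> W}" by (rule open_scale[OF W(1)])
      from open_transl[OF this, of "- y0"] show ?thesis unfolding T_def by simp
    qed
    moreover have "y0 \<in> T" using W(2) unfolding T_def by simp
    moreover have "T \<subseteq> {x \<in> topspace \<tau>. s x \<in> U}"
    proof
      fix y assume "y \<in> T"
      hence "\<bar>s (inverse \<delta> *\<^sub>R (y + (- y0)))\<bar> \<le> K" using bd unfolding T_def by blast
      moreover have "s (inverse \<delta> *\<^sub>R (y + (- y0))) = inverse \<delta> * (s y - s y0)"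
        using lin by (simp add: linear_scale linear_diff)
      ultimately have "inverse \<delta> * \<bar>s y - s y0\<bar> \<le> K"
        using \<delta> by (simp add: abs_mult)
      hence "\<bar>s y - s y0\<bar> \<le> \<delta> * K" using \<delta> by (simp add: field_simps)
      also have "\<delta> * K < e" using e K unfolding \<delta>_def by (simp add: field_simps)
      finally have "s y \<in> ball (s y0) e" by (simp add: dist_real_def abs_minus_commute)
      thus "y \<in> {x \<in> topspace \<tau>. s x \<in> U}" using e top by auto
    qed
    ultimately show "\<exists>T. openin \<tau> T \<and> y0 \<in> T \<and> T \<subseteq> {x \<in> topspace \<tau>. s x \<in> U}" by blast
  qed
  thus ?thesis unfolding continuous_map_def by auto
qed

end

context lcs_ctx begin

lemma lsc_open: "lsc_on \<tau> g \<Longrightarrow> openin \<tau> {y. g y > ereal r}"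
proof -
  assume "lsc_on \<tau> g"
  hence "closedin \<tau> {z \<in> topspace \<tau>. g z \<le> ereal r}" unfolding lsc_on_def by blast
  hence "openin \<tau> (topspace \<tau> - {z \<in> topspace \<tau>. g z \<le> ereal r})" unfolding closedin_def by blast
  moreover have "topspace \<tau> - {z \<in> topspace \<tau>. g z \<le> ereal r} = {y. g y > ereal r}"
    using top by auto
  ultimately show ?thesis by simp
qed

lemma path_cont: "continuous_map (prod_topology euclideanreal \<tau>) \<tau> (\<lambda>p. x + fst p *\<^sub>R v + snd p)"
proof -
  have c1: "continuous_map (prod_topology euclideanreal \<tau>) (prod_topology \<tau> \<tau>) (\<lambda>p. (fst p *\<^sub>R v, snd p))"
  proof (intro continuous_map_pairedI)
    show "continuous_map (prod_topology euclideanreal \<tau>) \<tau> (\<lambda>p. fst p *\<^sub>R v)"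
      using continuous_map_compose[OF continuous_map_fst ray_cont[of v]] by (simp add: o_def)
    show "continuous_map (prod_topology euclideanreal \<tau>) \<tau> snd" by (rule continuous_map_snd)
  qed
  have c2: "continuous_map (prod_topology euclideanreal \<tau>) \<tau> (\<lambda>p. fst p *\<^sub>R v + snd p)"
    using continuous_map_compose[OF c1 add_cont] by (simp add: o_def)
  have "continuous_map (prod_topology euclideanreal \<tau>) \<tau> (\<lambda>p. (fst p *\<^sub>R v + snd p) + x)"
    using continuous_map_compose[OF c2 transl_cont[of x]] by (simp add: o_def)
  thus ?thesis by (simp add: algebra_simps)
qed

lemma tube_local:
  assumes lsc: "lsc_on \<tau> g" and pos: "g (x + tz *\<^sub>R v) > ereal (a + tz*b)"
  shows "\<exists>\<rho> W \<eta>. \<rho> > 0 \<and> openin \<tau> W \<and> 0 \<in> W \<and> \<eta> > 0 \<and>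
    (\<forall>\<theta>. \<bar>\<theta> - tz\<bar> < \<rho> \<longrightarrow> (\<forall>w\<in>W. \<forall>\<xi>. \<bar>\<xi>\<bar> < \<eta> \<longrightarrow> g (x + \<theta> *\<^sub>R v + w) > ereal (a + \<theta>*b + \<xi>)))"
proof -
  obtain r where r: "ereal (a + tz*b) < ereal r" "ereal r < g (x + tz *\<^sub>R v)"
    using ereal_dense2[OF pos] by blast
  have r1: "a + tz*b < r" using r(1) by simp
  define P where "P = {p \<in> topspace (prod_topology euclideanreal \<tau>). x + fst p *\<^sub>R v + snd p \<in> {y. g y > ereal r}}"
  have "openin (prod_topology euclideanreal \<tau>) P"
    unfolding P_def by (rule openin_continuous_map_preimage[OF path_cont lsc_open[OF lsc]])
  moreover have "(tz, 0) \<in> P" unfolding P_def using r(2) top by simp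
  ultimately obtain U V where UV: "openin euclideanreal U" "openin \<tau> V" "tz \<in> U" "0 \<in> V" "U \<times> V \<subseteq> P"
    using openin_prod_topology_alt[THEN iffD1, rule_format] by metis
  have "open U" using UV(1) by simp
  then obtain \<rho>0 where \<rho>0: "\<rho>0 > 0" "ball tz \<rho>0 \<subseteq> U" using UV(3) open_contains_ball by blast
  define \<eta> where "\<eta> = (r - (a + tz*b)) / 2"
  have \<eta>: "\<eta> > 0" using r1 unfolding \<eta>_def by simp
  define \<rho> where "\<rho> = min \<rho>0 (\<eta> / (\<bar>b\<bar> + 1))"
  have \<rho>: "\<rho> > 0" using \<rho>0 \<eta> unfolding \<rho>_def by simp
  have "\<forall>\<theta>. \<bar>\<theta> - tz\<bar> < \<rho> \<longrightarrow> (\<forall>w\<in>V. \<forall>\<xi>. \<bar>\<xi>\<bar> < \<eta> \<longrightarrow> g (x + \<theta> *\<^sub>R v + w) > ereal (a + \<theta>*b + \<xi>))"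
  proof (intro allI impI ballI)
    fix \<theta> w \<xi> assume th: "\<bar>\<theta> - tz\<bar> < \<rho>" and w: "w \<in> V" and xi: "\<bar>\<xi>\<bar> < \<eta>"
    have "\<theta> \<in> U" using th \<rho>0 unfolding \<rho>_def by (auto simp: dist_real_def abs_minus_commute)
    hence "(\<theta>, w) \<in> P" using UV(5) w by blast
    hence gr: "g (x + \<theta> *\<^sub>R v + w) > ereal r" unfolding P_def by simp
    have "\<bar>\<theta> - tz\<bar> * \<bar>b\<bar> \<le> (\<eta> / (\<bar>b\<bar> + 1)) * \<bar>b\<bar>"
      using th unfolding \<rho>_def by (intro mult_right_mono) auto
    also have "\<dots> < \<eta>" using \<eta> by (simp add: field_simps)
    finally have "\<bar>(\<theta> - tz) * b\<bar> < \<eta>" by (simp add: abs_mult)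
    hence h1: "(\<theta> - tz) * b < \<eta>" using abs_ge_self[of "(\<theta> - tz)*b"] by linarith
    have h2: "\<xi> < \<eta>" using xi abs_ge_self[of \<xi>] by linarith
    have "a + \<theta>*b + \<xi> = (a + tz*b) + (\<theta> - tz) * b + \<xi>" by (simp add: algebra_simps)
    also have "\<dots> < (a + tz*b) + 2 * \<eta>" using h1 h2 by linarith
    also have "\<dots> = r" unfolding \<eta>_def by (simp add: field_simps)
    finally have "a + \<theta>*b + \<xi> < r" .
    hence "ereal (a + \<theta>*b + \<xi>) < ereal r" by simp
    thus "g (x + \<theta> *\<^sub>R v + w) > ereal (a + \<theta>*b + \<xi>)" using gr by (rule less_trans)
  qed
  thus ?thesis using \<rho> UV(2,4) \<eta> by blast
qed

lemma tube:
  assumes lsc: "lsc_on \<tau> g" and pos: "\<forall>\<theta>\<in>{0..1}. g (x + \<theta> *\<^sub>R v) > ereal (a + \<theta>*b)"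
  shows "\<exists>W \<eta>. openin \<tau> W \<and> 0 \<in> W \<and> \<eta> > 0 \<and>
    (\<forall>\<theta>\<in>{0..1}. \<forall>w\<in>W. \<forall>\<xi>. \<bar>\<xi>\<bar> < \<eta> \<longrightarrow> g (x + \<theta> *\<^sub>R v + w) > ereal (a + \<theta>*b + \<xi>))"
proof -
  define Q where "Q tz q \<longleftrightarrow> fst q > 0 \<and> openin \<tau> (fst (snd q)) \<and> 0 \<in> fst (snd q) \<and> snd (snd q) > 0 \<and>
    (\<forall>\<theta>. \<bar>\<theta> - tz\<bar> < fst q \<longrightarrow> (\<forall>w\<in>fst (snd q). \<forall>\<xi>. \<bar>\<xi>\<bar> < snd (snd q) \<longrightarrow> g (x + \<theta> *\<^sub>R v + w) > ereal (a + \<theta>*b + \<xi>)))"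
    for tz :: real and q :: "real \<times> 'a set \<times> real"
  have "\<forall>tz\<in>{0..1::real}. \<exists>q. Q tz q"
  proof
    fix tz :: real assume "tz \<in> {0..1}"
    then obtain \<rho> W \<eta> where "\<rho> > 0 \<and> openin \<tau> W \<and> 0 \<in> W \<and> \<eta> > 0 \<and>
      (\<forall>\<theta>. \<bar>\<theta> - tz\<bar> < \<rho> \<longrightarrow> (\<forall>w\<in>W. \<forall>\<xi>. \<bar>\<xi>\<bar> < \<eta> \<longrightarrow> g (x + \<theta> *\<^sub>R v + w) > ereal (a + \<theta>*b + \<xi>)))"
      using tube_local[OF lsc, where x=x and tz=tz and v=v and a=a and b=b] pos by blast
    hence "Q tz (\<rho>, W, \<eta>)" unfolding Q_def by simp
    thus "\<exists>q. Q tz q" by blast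
  qed
  then obtain q where q: "\<forall>tz\<in>{0..1::real}. Q tz (q tz)" by (rule bchoice[elim_format]) blast
  define \<rho> where "\<rho> tz = fst (q tz)" for tz
  define Wf where "Wf tz = fst (snd (q tz))" for tz
  define \<eta>f where "\<eta>f tz = snd (snd (q tz))" for tz
  have qq: "\<rho> tz > 0" "openin \<tau> (Wf tz)" "0 \<in> Wf tz" "\<eta>f tz > 0"
    "\<And>\<theta> w \<xi>. \<bar>\<theta> - tz\<bar> < \<rho> tz \<Longrightarrow> w \<in> Wf tz \<Longrightarrow> \<bar>\<xi>\<bar> < \<eta>f tz \<Longrightarrow> g (x + \<theta> *\<^sub>R v + w) > ereal (a + \<theta>*b + \<xi>)"
    if "tz \<in> {0..1}" for tz
  proof -
    have "Q tz (q tz)" using q that by blast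
    note this[unfolded Q_def, folded \<rho>_def Wf_def \<eta>f_def]
    thus "\<rho> tz > 0" "openin \<tau> (Wf tz)" "0 \<in> Wf tz" "\<eta>f tz > 0"
      "\<And>\<theta> w \<xi>. \<bar>\<theta> - tz\<bar> < \<rho> tz \<Longrightarrow> w \<in> Wf tz \<Longrightarrow> \<bar>\<xi>\<bar> < \<eta>f tz \<Longrightarrow> g (x + \<theta> *\<^sub>R v + w) > ereal (a + \<theta>*b + \<xi>)"
      by blast+
  qed
  have cov: "{0..1::real} \<subseteq> (\<Union>tz\<in>{0..1}. ball tz (\<rho> tz))"
  proof
    fix \<theta> :: real assume "\<theta> \<in> {0..1}"
    thus "\<theta> \<in> (\<Union>tz\<in>{0..1}. ball tz (\<rho> tz))" using qq(1)[of \<theta>] by force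
  qed
  obtain S where S: "S \<subseteq> {0..1}" "finite S" "{0..1::real} \<subseteq> (\<Union>tz\<in>S. ball tz (\<rho> tz))"
    using compactE_image[OF compact_Icc _ cov] by blast
  have Sne: "S \<noteq> {}" using S(3) by auto
  define W where "W = (\<Inter>tz\<in>S. Wf tz)"
  define \<eta> where "\<eta> = Min (\<eta>f ` S)"
  have "openin \<tau> W" unfolding W_def using S Sne qq(2) by (intro openin_INT2) auto
  moreover have "0 \<in> W" unfolding W_def using S qq(3) by auto
  moreover have "\<eta> > 0" unfolding \<eta>_def using S Sne qq(4) by (subst Min_gr_iff) auto
  moreover have "\<forall>\<theta>\<in>{0..1}. \<forall>w\<in>W. \<forall>\<xi>. \<bar>\<xi>\<bar> < \<eta> \<longrightarrow> g (x + \<theta> *\<^sub>R v + w) > ereal (a + \<theta>*b + \<xi>)"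
  proof (intro ballI allI impI)
    fix \<theta> w \<xi> assume th: "\<theta> \<in> {0..1::real}" and w: "w \<in> W" and xi: "\<bar>\<xi>\<bar> < \<eta>"
    obtain tz where t0: "tz \<in> S" "\<theta> \<in> ball tz (\<rho> tz)" using S(3) th by blast
    have "\<eta> \<le> \<eta>f tz" unfolding \<eta>_def using S(2) t0(1) by simp
    moreover have "w \<in> Wf tz" using w t0(1) unfolding W_def by blast
    moreover have "\<bar>\<theta> - tz\<bar> < \<rho> tz" using t0(2) by (simp add: dist_real_def abs_minus_commute)
    ultimately show "g (x + \<theta> *\<^sub>R v + w) > ereal (a + \<theta>*b + \<xi>)"
      using qq(5)[of tz \<theta> w \<xi>] t0(1) S(1) xi by auto
  qed
  ultimately show ?thesis by blast
qed

end

lemma frac_lt: assumes "(c::real) > 0" shows "c / (2 * (\<bar>r\<bar> + 1)) * \<bar>r\<bar> < c"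
proof -
  have "c / (2 * (\<bar>r\<bar> + 1)) * \<bar>r\<bar> \<le> c / (2 * (\<bar>r\<bar> + 1)) * (\<bar>r\<bar> + 1)"
    using assms by (intro mult_left_mono) auto
  also have "\<dots> = c / 2" by (simp add: field_simps)
  finally have "c / (2 * (\<bar>r\<bar> + 1)) * \<bar>r\<bar> \<le> c / 2" .
  thus ?thesis using assms by linarith
qed

context lcs_ctx begin

lemma epi_convex:
  fixes g :: "'a \<Rightarrow> ereal"
  assumes cvx: "convex_fn g"
  shows "convex {(y, r::real). g y \<le> ereal r}"
proof (rule convexI)
  fix p q :: "'a \<times> real" and u v :: real
  assume p: "p \<in> {(y, r). g y \<le> ereal r}" and q: "q \<in> {(y, r). g y \<le> ereal r}"
    and uv: "0 \<le> u" "0 \<le> v" "u + v = 1"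
  obtain y1 r1 where p': "p = (y1, r1)" "g y1 \<le> ereal r1" using p by auto
  obtain y2 r2 where q': "q = (y2, r2)" "g y2 \<le> ereal r2" using q by auto
  have "g (u *\<^sub>R y1 + v *\<^sub>R y2) \<le> ereal (u * r1 + v * r2)"
  proof (cases "u = 0")
    case True thus ?thesis using uv q' by simp
  next
    case u0: False
    show ?thesis
    proof (cases "v = 0")
      case True thus ?thesis using uv p' by simp
    next
      case False
      have u: "0 < u" "u < 1" using u0 False uv by auto
      have "g (u *\<^sub>R y1 + (1 - u) *\<^sub>R y2) \<le> ereal u * g y1 + ereal (1 - u) * g y2"
        using cvx u unfolding convex_fn_def by blast
      also have "\<dots> \<le> ereal u * ereal r1 + ereal (1 - u) * ereal r2"
        using u p'(2) q'(2) by (intro add_mono ereal_mult_left_mono) auto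
      moreover have "v = 1 - u" using uv by simp
      ultimately show ?thesis by simp
    qed
  qed
  thus "u *\<^sub>R p + v *\<^sub>R q \<in> {(y, r). g y \<le> ereal r}" using p' q' by simp
qed

lemma dir_subgrad:
  assumes prp: "proper_fn g" and cvx: "convex_fn g" and lsc: "lsc_on \<tau> g"
    and gx: "g x = ereal gx" and eps: "\<epsilon> > 0"
    and H: "\<And>l. l > 0 \<Longrightarrow> g (x + l *\<^sub>R z) \<ge> ereal (gx - \<epsilon>/2 + M * l)"
  shows "\<exists>s\<in>eps_subdiff \<tau> \<epsilon> g x. s z > M - 1"
proof -
  define v where "v = \<epsilon> *\<^sub>R z"
  define a where "a = gx - \<epsilon>/2"
  define b where "b = (M - 1/2) * \<epsilon>"
  have pos: "\<forall>\<theta>\<in>{0..1}. g (x + \<theta> *\<^sub>R v) > ereal (a + \<theta>*b)"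
  proof
    fix \<theta> :: real assume th: "\<theta> \<in> {0..1}"
    show "g (x + \<theta> *\<^sub>R v) > ereal (a + \<theta>*b)"
    proof (cases "\<theta> = 0")
      case True thus ?thesis using gx eps unfolding a_def by simp
    next
      case False
      hence tp: "\<theta> * \<epsilon> > 0" using th eps by simp
      have "ereal (a + \<theta>*b) < ereal (gx - \<epsilon>/2 + M * (\<theta> * \<epsilon>))"
        using tp unfolding a_def b_def by (simp add: algebra_simps)
      also have "\<dots> \<le> g (x + (\<theta> * \<epsilon>) *\<^sub>R z)" by (rule H[OF tp])
      also have "x + (\<theta> * \<epsilon>) *\<^sub>R z = x + \<theta> *\<^sub>R v" unfolding v_def by simp
      finally show ?thesis .
    qed
  qed
  obtain W0 \<eta> where W0: "openin \<tau> W0" "0 \<in> W0" "\<eta> > 0"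
    and tb: "\<And>\<theta> w \<xi>. \<theta> \<in> {0..1} \<Longrightarrow> w \<in> W0 \<Longrightarrow> \<bar>\<xi>\<bar> < \<eta> \<Longrightarrow> g (x + \<theta> *\<^sub>R v + w) > ereal (a + \<theta>*b + \<xi>)"
    using tube[OF lsc pos] by blast
  obtain W where W: "openin \<tau> W" "convex W" "0 \<in> W" "W \<subseteq> W0" "\<And>w. w \<in> W \<Longrightarrow> -w \<in> W"
    using sym_cvx_nbhd[OF W0(1,2)] by blast
  define A where "A = {(x + \<theta> *\<^sub>R v + w, a + \<theta>*b + \<xi>) | \<theta> w \<xi>. \<theta> \<in> {0..1} \<and> w \<in> W \<and> \<bar>\<xi>\<bar> < \<eta>}"
  define E where "E = {(y, r::real). g y \<le> ereal r}"
  define c0 where "c0 = ((0::'a), a - gx)"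
  define D where "D = {p - e - c0 | p e. p \<in> A \<and> e \<in> E}"
  define v1 where "v1 = ((0::'a), gx - a)"
  have Amem: "(x + \<theta> *\<^sub>R v + w, a + \<theta>*b + \<xi>) \<in> A" if "\<theta> \<in> {0..1}" "w \<in> W" "\<bar>\<xi>\<bar> < \<eta>" for \<theta> w \<xi>
    unfolding A_def using that by blast
  have Emem: "(y, r) \<in> E" if "g y \<le> ereal r" for y r unfolding E_def using that by simp
  have disj: "p \<noteq> e" if pA: "p \<in> A" and eE: "e \<in> E" for p e
  proof
    assume pe: "p = e"
    obtain \<theta> w \<xi> where p: "p = (x + \<theta> *\<^sub>R v + w, a + \<theta>*b + \<xi>)" "\<theta> \<in> {0..1}" "w \<in> W" "\<bar>\<xi>\<bar> < \<eta>"
      using pA unfolding A_def by blast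
    have "g (fst e) \<le> ereal (snd e)" using eE unfolding E_def by auto
    moreover have "e = (x + \<theta> *\<^sub>R v + w, a + \<theta>*b + \<xi>)" using pe p(1) by simp
    ultimately have "g (x + \<theta> *\<^sub>R v + w) \<le> ereal (a + \<theta>*b + \<xi>)" by simp
    moreover have "g (x + \<theta> *\<^sub>R v + w) > ereal (a + \<theta>*b + \<xi>)" using tb p W(4) by blast
    ultimately show False by simp
  qed
  have cvxA: "convex A"
  proof (rule convexI)
    fix p q :: "'a \<times> real" and u u' :: real
    assume p: "p \<in> A" and q: "q \<in> A" and uv: "0 \<le> u" "0 \<le> u'" "u + u' = 1"
    obtain \<theta>1 w1 \<xi>1 where p': "p = (x + \<theta>1 *\<^sub>R v + w1, a + \<theta>1*b + \<xi>1)" "\<theta>1 \<in> {0..1}" "w1 \<in> W" "\<bar>\<xi>1\<bar> < \<eta>"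
      using p unfolding A_def by blast
    obtain \<theta>2 w2 \<xi>2 where q': "q = (x + \<theta>2 *\<^sub>R v + w2, a + \<theta>2*b + \<xi>2)" "\<theta>2 \<in> {0..1}" "w2 \<in> W" "\<bar>\<xi>2\<bar> < \<eta>"
      using q unfolding A_def by blast
    have th: "u * \<theta>1 + u' * \<theta>2 \<in> {0..1}"
      using p'(2) q'(2) uv by (auto intro: convex_bound_le add_nonneg_nonneg mult_nonneg_nonneg)
    have w: "u *\<^sub>R w1 + u' *\<^sub>R w2 \<in> W" using convexD[OF W(2) p'(3) q'(3) uv] .
    have "\<bar>u * \<xi>1 + u' * \<xi>2\<bar> \<le> u * \<bar>\<xi>1\<bar> + u' * \<bar>\<xi>2\<bar>"
      using uv by (metis abs_mult abs_of_nonneg abs_triangle_ineq)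
    also have "\<dots> < \<eta>" using p'(4) q'(4) uv by (rule convex_bound_lt)
    finally have xi: "\<bar>u * \<xi>1 + u' * \<xi>2\<bar> < \<eta>" .
    have u1: "u = 1 - u'" using uv by simp
    have "u *\<^sub>R p + u' *\<^sub>R q = (x + (u * \<theta>1 + u' * \<theta>2) *\<^sub>R v + (u *\<^sub>R w1 + u' *\<^sub>R w2),
        a + (u * \<theta>1 + u' * \<theta>2)*b + (u * \<xi>1 + u' * \<xi>2))"
      unfolding p'(1) q'(1) u1 by (simp add: algebra_simps)
    thus "u *\<^sub>R p + u' *\<^sub>R q \<in> A" using Amem[OF th w xi] by simp
  qed
  have cvxE: "convex E" unfolding E_def by (rule epi_convex[OF cvx])
  have cvxD: "convex D"
  proof (rule convexI)
    fix p q :: "'a \<times> real" and u u' :: real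
    assume p: "p \<in> D" and q: "q \<in> D" and uv: "0 \<le> u" "0 \<le> u'" "u + u' = 1"
    obtain p1 e1 where p': "p = p1 - e1 - c0" "p1 \<in> A" "e1 \<in> E" using p unfolding D_def by blast
    obtain p2 e2 where q': "q = p2 - e2 - c0" "p2 \<in> A" "e2 \<in> E" using q unfolding D_def by blast
    have "u *\<^sub>R p1 + u' *\<^sub>R p2 \<in> A" using convexD[OF cvxA p'(2) q'(2) uv] .
    moreover have "u *\<^sub>R e1 + u' *\<^sub>R e2 \<in> E" using convexD[OF cvxE p'(3) q'(3) uv] .
    moreover have "u *\<^sub>R p + u' *\<^sub>R q = (u *\<^sub>R p1 + u' *\<^sub>R p2) - (u *\<^sub>R e1 + u' *\<^sub>R e2) - c0"
    proof -
      have u1: "u = 1 - u'" using uv by simp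
      show ?thesis unfolding p'(1) q'(1) u1 by (simp add: algebra_simps)
    qed
    ultimately show "u *\<^sub>R p + u' *\<^sub>R q \<in> D" unfolding D_def by blast
  qed
  have ex0: "(x, gx) \<in> E" using gx by (intro Emem) simp
  have absorbD: "\<exists>t>0. t *\<^sub>R d \<in> D" for d
  proof -
    obtain y r where d: "d = (y, r)" by (cases d)
    obtain e1 where e1: "e1 > 0" "\<And>c. \<bar>c\<bar> < e1 \<Longrightarrow> c *\<^sub>R y \<in> W" using nbhd_absorb[OF W(1,3)] by blast
    define t where "t = min (e1/2) (\<eta> / (2 * (\<bar>r\<bar> + 1)))"
    have t: "t > 0" using e1 W0(3) unfolding t_def by simp
    have "\<bar>t\<bar> < e1" using t e1 unfolding t_def by simp
    hence ty: "t *\<^sub>R y \<in> W" using e1 by blast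
    have "\<bar>t * r\<bar> \<le> (\<eta> / (2 * (\<bar>r\<bar> + 1))) * \<bar>r\<bar>"
      using t unfolding abs_mult by (intro mult_right_mono) (auto simp: t_def)
    also have "\<dots> < \<eta>" by (rule frac_lt[OF W0(3)])
    finally have tr: "\<bar>t * r\<bar> < \<eta>" .
    have "(x + 0 *\<^sub>R v + t *\<^sub>R y, a + 0 * b + t * r) \<in> A" by (rule Amem) (use ty tr in auto)
    hence "(x + 0 *\<^sub>R v + t *\<^sub>R y, a + 0 * b + t * r) - (x, gx) - c0 \<in> D"
      unfolding D_def using ex0 by blast
    moreover have "(x + 0 *\<^sub>R v + t *\<^sub>R y, a + 0 * b + t * r) - (x, gx) - c0 = t *\<^sub>R d"
      unfolding d c0_def by simp
    ultimately show ?thesis using t by auto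
  qed
  have aopen: "\<exists>\<delta>>0. (1 + \<delta>) *\<^sub>R d \<in> D" if dD: "d \<in> D" for d
  proof -
    obtain p e where pe: "d = p - e - c0" "p \<in> A" "e \<in> E" using dD unfolding D_def by blast
    obtain \<theta> w \<xi> where p': "p = (x + \<theta> *\<^sub>R v + w, a + \<theta>*b + \<xi>)" "\<theta> \<in> {0..1}" "w \<in> W" "\<bar>\<xi>\<bar> < \<eta>"
      using pe(2) unfolding A_def by blast
    obtain d1 d2 where d: "d = (d1, d2)" by (cases d)
    have "openin \<tau> {u. u + w \<in> W}" by (rule open_transl[OF W(1)])
    moreover have "0 \<in> {u. u + w \<in> W}" using p'(3) by simp
    ultimately obtain e1 where e1: "e1 > 0" "\<And>c. \<bar>c\<bar> < e1 \<Longrightarrow> c *\<^sub>R d1 \<in> {u. u + w \<in> W}"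
      using nbhd_absorb by blast
    define \<delta> where "\<delta> = min (e1/2) ((\<eta> - \<bar>\<xi>\<bar>) / (2 * (\<bar>d2\<bar> + 1)))"
    have \<delta>: "\<delta> > 0" using e1 p'(4) unfolding \<delta>_def by simp
    have "\<bar>\<delta>\<bar> < e1" using \<delta> e1 unfolding \<delta>_def by simp
    hence w': "\<delta> *\<^sub>R d1 + w \<in> W" using e1 by blast
    have "\<bar>\<delta> * d2\<bar> \<le> ((\<eta> - \<bar>\<xi>\<bar>) / (2 * (\<bar>d2\<bar> + 1))) * \<bar>d2\<bar>"
      using \<delta> unfolding abs_mult by (intro mult_right_mono) (auto simp: \<delta>_def)
    also have "\<dots> < \<eta> - \<bar>\<xi>\<bar>" using p'(4) by (intro frac_lt) simp
    finally have "\<bar>\<xi> + \<delta> * d2\<bar> < \<eta>" by linarith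
    hence "(x + \<theta> *\<^sub>R v + (\<delta> *\<^sub>R d1 + w), a + \<theta>*b + (\<xi> + \<delta> * d2)) \<in> A"
      using Amem[OF p'(2) w'] by blast
    hence "(x + \<theta> *\<^sub>R v + (\<delta> *\<^sub>R d1 + w), a + \<theta>*b + (\<xi> + \<delta> * d2)) - e - c0 \<in> D"
      unfolding D_def using pe(3) by blast
    moreover have "(x + \<theta> *\<^sub>R v + (\<delta> *\<^sub>R d1 + w), a + \<theta>*b + (\<xi> + \<delta> * d2)) - e - c0 = (1 + \<delta>) *\<^sub>R d"
    proof -
      have "(x + \<theta> *\<^sub>R v + (\<delta> *\<^sub>R d1 + w), a + \<theta>*b + (\<xi> + \<delta> * d2)) = p + \<delta> *\<^sub>R d"
        unfolding p'(1) d by simp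
      moreover have "p + \<delta> *\<^sub>R d - e - c0 = (p - e - c0) + \<delta> *\<^sub>R d" by (simp add: algebra_simps)
      moreover have "p - e - c0 = d" using pe(1) by simp
      ultimately show ?thesis by (simp add: algebra_simps)
    qed
    ultimately show ?thesis using \<delta> by auto
  qed
  have v1D: "v1 \<notin> D"
  proof
    assume "v1 \<in> D"
    then obtain p e where pe: "v1 = p - e - c0" "p \<in> A" "e \<in> E" unfolding D_def by blast
    have "p = e" using pe(1) unfolding v1_def c0_def by (simp add: prod_eq_iff algebra_simps)
    thus False using disj pe by blast
  qed
  obtain F :: "'a \<times> real \<Rightarrow> real" where F: "linear F" "\<And>d. d \<in> D \<Longrightarrow> F d < 1" "F v1 \<ge> 1"
    using algebraic_separation[OF cvxD absorbD aopen v1D] by blast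
  have Fdec: "F (y, r) = F (y, 0) + r * F (0, 1)" for y r
  proof -
    have e1: "F ((y, 0) + r *\<^sub>R ((0::'a), 1::real)) = F (y,0) + F (r *\<^sub>R ((0::'a), 1::real))"
      by (rule linear_add[OF F(1)])
    have e2: "F (r *\<^sub>R ((0::'a), 1::real)) = r *\<^sub>R F (0,1)" by (rule linear_scale[OF F(1)])
    show ?thesis using e1 e2 by simp
  qed
  have key: "F p < F e" if "p \<in> A" "e \<in> E" for p e
  proof -
    have "p - e - c0 \<in> D" unfolding D_def using that by blast
    hence "F (p - e - c0) < F v1" using F(2) F(3) by (meson less_le_trans)
    moreover have "v1 = - c0" unfolding v1_def c0_def by simp
    ultimately show ?thesis using F(1) by (simp add: linear_diff linear_neg)
  qed
  define \<beta> where "\<beta> = F (0, 1)"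
  define s0 where "s0 y = F (y, 0)" for y
  have Fd: "F (y, r) = s0 y + r * \<beta>" for y r unfolding s0_def \<beta>_def by (rule Fdec)
  have lin0: "linear s0" unfolding s0_def
  proof (rule linearI)
    fix y1 y2 show "F (y1 + y2, 0) = F (y1, 0) + F (y2, 0)"
      using F(1) linear_add[OF F(1), of "(y1,0)" "(y2,0)"] by simp
  next
    fix c y show "F (c *\<^sub>R y, 0) = c *\<^sub>R F (y, 0)"
      using linear_scale[OF F(1), of c "(y,0)"] by simp
  qed
  have "(x + 0 *\<^sub>R v + 0, a + 0 * b + 0) \<in> A" using W(3) W0(3) by (intro Amem) auto
  hence xa: "(x, a) \<in> A" by simp
  have "F (x, a) < F (x, gx)" by (rule key[OF xa ex0])
  hence "a * \<beta> < gx * \<beta>" unfolding Fd by simp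
  moreover have "a < gx" unfolding a_def using eps by simp
  ultimately have "(gx - a) * \<beta> > 0" by (simp add: algebra_simps)
  moreover have "gx - a > 0" using \<open>a < gx\<close> by simp
  ultimately have \<beta>: "\<beta> > 0" by (simp add: zero_less_mult_iff)
  define s where "s y = - s0 y / \<beta>" for y
  have lins: "linear s" unfolding s_def
  proof (rule linearI)
    fix y1 y2 show "- s0 (y1 + y2) / \<beta> = - s0 y1 / \<beta> + - s0 y2 / \<beta>"
      using linear_add[OF lin0] \<beta> by (simp add: field_simps)
  next
    fix c y show "- s0 (c *\<^sub>R y) / \<beta> = c *\<^sub>R (- s0 y / \<beta>)"
      using linear_scale[OF lin0] by simp
  qed
  have bdW: "\<bar>s w\<bar> \<le> 1 / \<beta>" if w: "w \<in> W" for w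
  proof -
    have Dw: "(w', 0) \<in> D" if "w' \<in> W" for w'
    proof -
      have "(x + 0 *\<^sub>R v + w', a + 0 * b + 0) \<in> A" using that W0(3) by (intro Amem) auto
      hence "(x + 0 *\<^sub>R v + w', a + 0 * b + 0) - (x, gx) - c0 \<in> D" unfolding D_def using ex0 by blast
      moreover have "(x + 0 *\<^sub>R v + w', a + 0 * b + 0) - (x, gx) - c0 = (w', 0)" unfolding c0_def by simp
      ultimately show ?thesis by simp
    qed
    have "s0 w < 1" using F(2)[OF Dw[OF w]] unfolding s0_def .
    moreover have "s0 (-w) < 1" using F(2)[OF Dw[OF W(5)[OF w]]] unfolding s0_def .
    moreover have "s0 (-w) = - s0 w" using linear_neg[OF lin0] .
    ultimately have "\<bar>s0 w\<bar> < 1" by simp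
    thus ?thesis using \<beta> unfolding s_def by (simp add: field_simps abs_divide)
  qed
  have cont: "continuous_map \<tau> euclideanreal s" by (rule bounded_linear_cont[OF lins W(1,3) bdW])
  have sdual: "s \<in> dual \<tau>" unfolding dual_def using lins cont by simp
  have sub: "g y \<ge> g x + ereal (s (y - x) - \<epsilon>)" for y
  proof (cases "g y")
    case (real ry)
    have "(y, ry) \<in> E" using real by (intro Emem) simp
    from key[OF xa this] have "s0 x + a * \<beta> < s0 y + ry * \<beta>" unfolding Fd .
    hence "(s0 x - s0 y) / \<beta> + a < ry" using \<beta> by (simp add: field_simps)
    moreover have "s (y - x) = (s0 x - s0 y) / \<beta>"
    proof -
      have "s0 (y - x) = s0 y - s0 x" by (rule linear_diff[OF lin0])
      thus ?thesis unfolding s_def minus_diff_eq by (simp only: minus_diff_eq)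
    qed
    ultimately have "gx + (s (y - x) - \<epsilon>) \<le> ry" unfolding a_def using eps by simp
    thus ?thesis using real gx by simp
  next
    case PInf thus ?thesis by simp
  next
    case MInf thus ?thesis using prp unfolding proper_fn_def by blast
  qed
  have "s \<in> eps_subdiff \<tau> \<epsilon> g x" unfolding eps_subdiff_def using sdual sub gx by simp
  moreover have "s z > M - 1"
  proof -
    have "(x + 1 *\<^sub>R v + 0, a + 1 * b + 0) \<in> A" using W(3) W0(3) by (intro Amem) auto
    hence "(x + v, a + b) \<in> A" by simp
    from key[OF this ex0] have "s0 (x + v) + (a + b) * \<beta> < s0 x + gx * \<beta>" unfolding Fd .
    hence "s0 v < (gx - a - b) * \<beta>" using linear_add[OF lin0] by (simp add: algebra_simps)
    hence "s v > a + b - gx" using \<beta> unfolding s_def by (simp add: field_simps)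
    moreover have "s v = \<epsilon> * s z" unfolding v_def using linear_scale[OF lins] by simp
    ultimately have "\<epsilon> * s z > \<epsilon> * (M - 1)" unfolding a_def b_def by (simp add: algebra_simps)
    thus ?thesis using eps by simp
  qed
  ultimately show ?thesis by blast
qed

end

instantiation "fun" :: (type, real_vector) real_vector
begin
definition scaleR_fun :: "real \<Rightarrow> ('a \<Rightarrow> 'b) \<Rightarrow> 'a \<Rightarrow> 'b" where "scaleR_fun r f = (\<lambda>x. r *\<^sub>R f x)"
instance by standard (simp_all add: scaleR_fun_def fun_eq_iff scaleR_add_right scaleR_add_left)
end

lemma scaleR_fun_apply[simp]: "(r *\<^sub>R f) x = r *\<^sub>R f x" by (simp add: scaleR_fun_def)

lemma sum_fun_apply: "(sum f S) y = (\<Sum>i\<in>S. f i y)"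
  by (induction S rule: infinite_finite_induct) auto

lemma lin_sum: "linear f \<Longrightarrow> f (sum g S) = (\<Sum>a\<in>S. f (g a))"
  by (induction S rule: infinite_finite_induct) (auto simp: linear_add linear_0)

definition ind :: "'a \<Rightarrow> 'a \<Rightarrow> real" where "ind z = (\<lambda>y. if y = z then 1 else 0)"

lemma sum_ind_apply: "finite Z \<Longrightarrow> (\<Sum>z\<in>Z. u z *\<^sub>R ind z) y = (if y \<in> Z then u y else 0)"
  unfolding sum_fun_apply by (simp add: ind_def if_distrib cong: if_cong)

context lcs_ctx begin

lemma fconvex_convex: "fconvex C \<Longrightarrow> convex C"
proof (rule convexI)
  fix p q u v assume C: "fconvex C" and pq: "p \<in> C" "q \<in> C" and uv: "0 \<le> (u::real)" "0 \<le> v" "u + v = 1"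
  have "(\<lambda>z. u * p z + (1 - u) * q z) \<in> C" using C pq uv unfolding fconvex_def by auto
  moreover have "(\<lambda>z. u * p z + (1 - u) * q z) = u *\<^sub>R p + v *\<^sub>R q" using uv by (auto simp: fun_eq_iff)
  ultimately show "u *\<^sub>R p + v *\<^sub>R q \<in> C" by simp
qed

lemma wstar_box:
  assumes Ccl: "closedin (wstar \<tau>) C" and qd: "q \<in> dual \<tau>" and qC: "q \<notin> C"
  shows "\<exists>Z \<delta>. finite Z \<and> \<delta> > 0 \<and> (\<forall>\<psi>\<in>dual \<tau>. (\<forall>z\<in>Z. \<bar>\<psi> z - q z\<bar> < \<delta>) \<longrightarrow> \<psi> \<notin> C)"
proof -
  have tw: "topspace (wstar \<tau>) = dual \<tau>" unfolding wstar_def by simp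
  have "openin (wstar \<tau>) (dual \<tau> - C)" using Ccl tw unfolding closedin_def by simp
  then obtain Ob where Ob: "openin (product_topology (\<lambda>_. euclideanreal) UNIV) Ob" "dual \<tau> - C = Ob \<inter> dual \<tau>"
    unfolding wstar_def openin_subtopology by blast
  have "q \<in> Ob" using Ob(2) qd qC by blast
  then obtain U where U: "finite {i. U i \<noteq> UNIV}" "\<And>i. open (U i)" "q \<in> Pi\<^sub>E UNIV U" "Pi\<^sub>E UNIV U \<subseteq> Ob"
    using Ob(1) unfolding openin_product_topology_alt by force
  define Z where "Z = {i. U i \<noteq> UNIV}"
  have "\<forall>z\<in>Z. \<exists>e>0. ball (q z) e \<subseteq> U z"
    using U(2,3) open_contains_ball by blast
  then obtain e where e: "\<And>z. z \<in> Z \<Longrightarrow> e z > 0 \<and> ball (q z) (e z) \<subseteq> U z" by metis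
  define \<delta> where "\<delta> = Min (insert 1 (e ` Z))"
  have fZ: "finite Z" using U(1) unfolding Z_def .
  have \<delta>: "\<delta> > 0" unfolding \<delta>_def using fZ e by (subst Min_gr_iff) auto
  have \<delta>le: "\<delta> \<le> e z" if "z \<in> Z" for z unfolding \<delta>_def using fZ that by simp
  have "\<psi> \<notin> C" if \<psi>: "\<psi> \<in> dual \<tau>" "\<forall>z\<in>Z. \<bar>\<psi> z - q z\<bar> < \<delta>" for \<psi>
  proof -
    have "\<psi> \<in> Pi\<^sub>E UNIV U"
    proof (simp add: PiE_def Pi_def, intro allI)
      fix z show "\<psi> z \<in> U z"
      proof (cases "z \<in> Z")
        case True
        have "\<bar>\<psi> z - q z\<bar> < e z" using \<psi>(2) True \<delta>le[OF True] by force
        hence "\<psi> z \<in> ball (q z) (e z)" by (simp add: dist_real_def abs_minus_commute)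
        thus ?thesis using e[OF True] by blast
      next
        case False thus ?thesis unfolding Z_def by simp
      qed
    qed
    hence "\<psi> \<in> Ob" using U(4) by blast
    thus ?thesis using Ob(2) \<psi>(1) by blast
  qed
  thus ?thesis using fZ \<delta> by blast
qed



lemma sum_abs_le: "finite Z \<Longrightarrow> z \<in> Z \<Longrightarrow> \<bar>h z\<bar> \<le> (\<Sum>z\<in>Z. \<bar>h z :: real\<bar>)"
  by (rule member_le_sum) auto

lemma wstar_sep:
  assumes Cd: "C \<subseteq> dual \<tau>" and Ccl: "closedin (wstar \<tau>) C" and Cc: "fconvex C"
    and qd: "q \<in> dual \<tau>" and qC: "q \<notin> C"
  shows "\<exists>z c. (\<forall>\<psi>\<in>C. \<psi> z \<le> c) \<and> c < q z"
proof (cases "C = {}")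
  case True thus ?thesis by (intro exI[of _ 0] exI[of _ "q 0 - 1"]) auto
next
  case False
  then obtain \<psi>0 where \<psi>0: "\<psi>0 \<in> C" by blast
  obtain Z \<delta> where fZ: "finite Z" and \<delta>: "\<delta> > 0"
    and box: "\<And>\<psi>. \<psi> \<in> dual \<tau> \<Longrightarrow> (\<forall>z\<in>Z. \<bar>\<psi> z - q z\<bar> < \<delta>) \<Longrightarrow> \<psi> \<notin> C"
    using wstar_box[OF Ccl qd qC] by blast
  define A where "A = {u :: 'a \<Rightarrow> real. \<forall>z\<in>Z. \<bar>u z - q z\<bar> < \<delta>}"
  define c0 where "c0 = q - \<psi>0"
  define Ds where "Ds = {u - \<psi> - c0 | u \<psi>. u \<in> A \<and> \<psi> \<in> C}"
  have cvxC: "convex C" by (rule fconvex_convex[OF Cc])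
  have cvxA: "convex A"
  proof (rule convexI)
    fix p r :: "'a \<Rightarrow> real" and u v :: real
    assume p: "p \<in> A" and r: "r \<in> A" and uv: "0 \<le> u" "0 \<le> v" "u + v = 1"
    have "\<bar>(u *\<^sub>R p + v *\<^sub>R r) z - q z\<bar> < \<delta>" if z: "z \<in> Z" for z
    proof -
      have v1: "v = 1 - u" using uv by simp
      have "(u *\<^sub>R p + v *\<^sub>R r) z - q z = u * (p z - q z) + v * (r z - q z)"
        unfolding v1 by (simp add: algebra_simps)
      moreover have "\<bar>u * (p z - q z) + v * (r z - q z)\<bar> \<le> \<bar>u * (p z - q z)\<bar> + \<bar>v * (r z - q z)\<bar>"
        by (rule abs_triangle_ineq)
      moreover have "\<bar>u * (p z - q z)\<bar> = u * \<bar>p z - q z\<bar>" "\<bar>v * (r z - q z)\<bar> = v * \<bar>r z - q z\<bar>"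
        using uv by (simp_all add: abs_mult)
      ultimately have "\<bar>(u *\<^sub>R p + v *\<^sub>R r) z - q z\<bar> \<le> u * \<bar>p z - q z\<bar> + v * \<bar>r z - q z\<bar>"
        by simp
      also have "\<dots> < \<delta>" using p r z uv unfolding A_def by (intro convex_bound_lt) auto
      finally show ?thesis .
    qed
    thus "u *\<^sub>R p + v *\<^sub>R r \<in> A" unfolding A_def by blast
  qed
  have cvxD: "convex Ds"
  proof (rule convexI)
    fix p r :: "'a \<Rightarrow> real" and u u' :: real
    assume p: "p \<in> Ds" and r: "r \<in> Ds" and uv: "0 \<le> u" "0 \<le> u'" "u + u' = 1"
    obtain p1 e1 where p': "p = p1 - e1 - c0" "p1 \<in> A" "e1 \<in> C" using p unfolding Ds_def by blast
    obtain p2 e2 where r': "r = p2 - e2 - c0" "p2 \<in> A" "e2 \<in> C" using r unfolding Ds_def by blast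
    have "u *\<^sub>R p1 + u' *\<^sub>R p2 \<in> A" using convexD[OF cvxA p'(2) r'(2) uv] .
    moreover have "u *\<^sub>R e1 + u' *\<^sub>R e2 \<in> C" using convexD[OF cvxC p'(3) r'(3) uv] .
    moreover have "u *\<^sub>R p + u' *\<^sub>R r = (u *\<^sub>R p1 + u' *\<^sub>R p2) - (u *\<^sub>R e1 + u' *\<^sub>R e2) - c0"
    proof -
      have u1: "u = 1 - u'" using uv by simp
      show ?thesis unfolding p'(1) r'(1) u1 by (simp add: algebra_simps)
    qed
    ultimately show "u *\<^sub>R p + u' *\<^sub>R r \<in> Ds" unfolding Ds_def by blast
  qed
  have absorbD: "\<exists>t>0. t *\<^sub>R h \<in> Ds" for h
  proof -
    define M where "M = (\<Sum>z\<in>Z. \<bar>h z\<bar>)"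
    define t where "t = \<delta> / (2 * (\<bar>M\<bar> + 1))"
    have t: "t > 0" using \<delta> unfolding t_def by simp
    have "q + t *\<^sub>R h \<in> A" unfolding A_def
    proof (intro CollectI ballI)
      fix z assume z: "z \<in> Z"
      have "\<bar>h z\<bar> \<le> \<bar>M\<bar>" using sum_abs_le[OF fZ z, of h] unfolding M_def by simp
      hence "t * \<bar>h z\<bar> \<le> t * \<bar>M\<bar>" using t by (intro mult_left_mono) auto
      also have "t * \<bar>M\<bar> < \<delta>" unfolding t_def using frac_lt[OF \<delta>, of M] by (simp add: mult.commute)
      finally show "\<bar>(q + t *\<^sub>R h) z - q z\<bar> < \<delta>" using t by (simp add: abs_mult)
    qed
    hence "(q + t *\<^sub>R h) - \<psi>0 - c0 \<in> Ds" unfolding Ds_def using \<psi>0 by blast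
    moreover have "(q + t *\<^sub>R h) - \<psi>0 - c0 = t *\<^sub>R h" unfolding c0_def by simp
    ultimately show ?thesis using t by auto
  qed
  have aopen: "\<exists>\<delta>'>0. (1 + \<delta>') *\<^sub>R d \<in> Ds" if dD: "d \<in> Ds" for d
  proof -
    obtain u \<psi> where d: "d = u - \<psi> - c0" "u \<in> A" "\<psi> \<in> C" using dD unfolding Ds_def by blast
    define m where "m = Min (insert 1 ((\<lambda>z. \<delta> - \<bar>u z - q z\<bar>) ` Z))"
    have m: "m > 0" unfolding m_def using fZ d(2) unfolding A_def by (subst Min_gr_iff) auto
    have mle: "m \<le> \<delta> - \<bar>u z - q z\<bar>" if "z \<in> Z" for z unfolding m_def using fZ that by simp
    define M where "M = (\<Sum>z\<in>Z. \<bar>d z\<bar>)"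
    define t where "t = m / (2 * (\<bar>M\<bar> + 1))"
    have t: "t > 0" using m unfolding t_def by simp
    have "u + t *\<^sub>R d \<in> A" unfolding A_def
    proof (intro CollectI ballI)
      fix z assume z: "z \<in> Z"
      have "\<bar>d z\<bar> \<le> \<bar>M\<bar>" using sum_abs_le[OF fZ z, of d] unfolding M_def by simp
      hence "t * \<bar>d z\<bar> \<le> t * \<bar>M\<bar>" using t by (intro mult_left_mono) auto
      also have "t * \<bar>M\<bar> < m" unfolding t_def using frac_lt[OF m, of M] by (simp add: mult.commute)
      finally have "t * \<bar>d z\<bar> < m" .
      hence "\<bar>u z - q z\<bar> + t * \<bar>d z\<bar> < \<delta>" using mle[OF z] by linarith
      moreover have "\<bar>(u + t *\<^sub>R d) z - q z\<bar> \<le> \<bar>u z - q z\<bar> + t * \<bar>d z\<bar>"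
      proof -
        have "(u + t *\<^sub>R d) z - q z = (u z - q z) + t * d z" by simp
        moreover have "\<bar>(u z - q z) + t * d z\<bar> \<le> \<bar>u z - q z\<bar> + \<bar>t * d z\<bar>" by (rule abs_triangle_ineq)
        moreover have "\<bar>t * d z\<bar> = t * \<bar>d z\<bar>" using t by (simp add: abs_mult)
        ultimately show ?thesis by simp
      qed
      ultimately show "\<bar>(u + t *\<^sub>R d) z - q z\<bar> < \<delta>" by linarith
    qed
    hence "(u + t *\<^sub>R d) - \<psi> - c0 \<in> Ds" unfolding Ds_def using d(3) by blast
    moreover have "(u + t *\<^sub>R d) - \<psi> - c0 = (1 + t) *\<^sub>R d"
    proof -
      have "(u + t *\<^sub>R d) - \<psi> - c0 = (u - \<psi> - c0) + t *\<^sub>R d" by (simp add: algebra_simps)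
      also have "\<dots> = (1 + t) *\<^sub>R d" using d(1) by (simp add: algebra_simps)
      finally show ?thesis .
    qed
    ultimately show ?thesis using t by auto
  qed
  have v1D: "- c0 \<notin> Ds"
  proof
    assume "- c0 \<in> Ds"
    then obtain u \<psi> where d: "- c0 = u - \<psi> - c0" "u \<in> A" "\<psi> \<in> C" unfolding Ds_def by blast
    have "u = \<psi>" using d(1) by (simp add: algebra_simps)
    hence "\<forall>z\<in>Z. \<bar>\<psi> z - q z\<bar> < \<delta>" using d(2) unfolding A_def by simp
    thus False using box[of \<psi>] d(3) Cd by blast
  qed
  obtain \<Phi> :: "('a \<Rightarrow> real) \<Rightarrow> real" where \<Phi>: "linear \<Phi>" "\<And>d. d \<in> Ds \<Longrightarrow> \<Phi> d < 1" "\<Phi> (- c0) \<ge> 1"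
    using algebraic_separation[OF cvxD absorbD aopen v1D] by blast
  have key: "\<Phi> u < \<Phi> \<psi>" if "u \<in> A" "\<psi> \<in> C" for u \<psi>
  proof -
    have "u - \<psi> - c0 \<in> Ds" unfolding Ds_def using that by blast
    hence "\<Phi> (u - \<psi> - c0) < \<Phi> (- c0)" using \<Phi>(2) \<Phi>(3) by (meson less_le_trans)
    thus ?thesis using \<Phi>(1) by (simp add: linear_diff linear_neg)
  qed
  have qA: "q \<in> A" unfolding A_def using \<delta> by simp
  have vanish: "\<Phi> h = 0" if h: "\<forall>z\<in>Z. h z = 0" for h
  proof (rule ccontr)
    assume nz: "\<Phi> h \<noteq> 0"
    define t where "t = (\<Phi> \<psi>0 - \<Phi> q) / \<Phi> h"
    have "q + t *\<^sub>R h \<in> A" unfolding A_def using h \<delta> by simp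
    from key[OF this \<psi>0] have "\<Phi> q + t * \<Phi> h < \<Phi> \<psi>0" using \<Phi>(1) by (simp add: linear_add linear_scale)
    moreover have "t * \<Phi> h = \<Phi> \<psi>0 - \<Phi> q" unfolding t_def using nz by simp
    ultimately show False by simp
  qed
  have repr: "\<Phi> u = (\<Sum>z\<in>Z. u z * \<Phi> (ind z))" for u
  proof -
    define u' where "u' = (\<Sum>z\<in>Z. u z *\<^sub>R ind z)"
    have "\<forall>z\<in>Z. (u - u') z = 0" unfolding u'_def using sum_ind_apply[OF fZ] by simp
    hence "\<Phi> (u - u') = 0" by (rule vanish)
    hence "\<Phi> u = \<Phi> u'" using \<Phi>(1) by (simp add: linear_diff)
    also have "\<Phi> u' = (\<Sum>z\<in>Z. \<Phi> (u z *\<^sub>R ind z))" unfolding u'_def by (rule lin_sum[OF \<Phi>(1)])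
    also have "\<dots> = (\<Sum>z\<in>Z. u z * \<Phi> (ind z))" using \<Phi>(1) by (simp add: linear_scale)
    finally show ?thesis .
  qed
  obtain z1 where z1: "z1 \<in> Z" "\<Phi> (ind z1) \<noteq> 0"
  proof (rule ccontr)
    assume "\<not> thesis"
    hence "\<forall>z\<in>Z. \<Phi> (ind z) = 0" using that by blast
    hence "\<Phi> u = 0" for u using repr[of u] by simp
    thus False using key[OF qA \<psi>0] by simp
  qed
  define \<gamma> where "\<gamma> = (\<delta>/2) * \<bar>\<Phi> (ind z1)\<bar>"
  have \<gamma>: "\<gamma> > 0" unfolding \<gamma>_def using \<delta> z1 by simp
  define h1 where "h1 = ((\<delta>/2) * sgn (\<Phi> (ind z1))) *\<^sub>R ind z1"
  have qh1: "q + h1 \<in> A" unfolding A_def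
  proof (intro CollectI ballI)
    fix z assume "z \<in> Z"
    have "\<bar>h1 z\<bar> \<le> \<delta>/2" unfolding h1_def ind_def using \<delta> by (auto simp: abs_mult abs_sgn_eq)
    thus "\<bar>(q + h1) z - q z\<bar> < \<delta>" using \<delta> by simp
  qed
  have Phh: "\<Phi> (q + h1) = \<Phi> q + \<gamma>"
    unfolding h1_def \<gamma>_def using \<Phi>(1) by (simp add: linear_add linear_scale abs_sgn mult.assoc)
  have sep: "\<Phi> q + \<gamma> < \<Phi> \<psi>" if pC: "\<psi> \<in> C" for \<psi> using key[OF qh1 pC] Phh by simp
  define zs where "zs = (\<Sum>z\<in>Z. \<Phi> (ind z) *\<^sub>R z)"
  have eval: "\<psi> zs = \<Phi> \<psi>" if "\<psi> \<in> dual \<tau>" for \<psi>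
  proof -
    have lin: "linear \<psi>" using that unfolding dual_def by simp
    have "\<psi> zs = (\<Sum>z\<in>Z. \<psi> (\<Phi> (ind z) *\<^sub>R z))" unfolding zs_def by (rule lin_sum[OF lin])
    also have "\<dots> = (\<Sum>z\<in>Z. \<psi> z * \<Phi> (ind z))" using lin by (simp add: linear_scale mult.commute)
    also have "\<dots> = \<Phi> \<psi>" using repr[of \<psi>] by simp
    finally show ?thesis .
  qed
  have "\<forall>\<psi>\<in>C. \<psi> (- zs) \<le> - (\<Phi> q + \<gamma>)"
  proof
    fix \<psi> assume p: "\<psi> \<in> C"
    hence pd: "\<psi> \<in> dual \<tau>" using Cd by blast
    hence "\<psi> (- zs) = - \<Phi> \<psi>" using eval[OF pd] linear_neg[of \<psi> zs] unfolding dual_def by simp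
    thus "\<psi> (- zs) \<le> - (\<Phi> q + \<gamma>)" using sep[OF p] by simp
  qed
  moreover have "q (- zs) = - \<Phi> q" using eval[OF qd] linear_neg[of q zs] qd unfolding dual_def by simp
  ultimately show ?thesis using \<gamma> by (intro exI[of _ "- zs"] exI[of _ "- (\<Phi> q + \<gamma>)"]) auto
qed

end

context lcs_ctx begin

lemma tw: "topspace (wstar \<tau>) = dual \<tau>" unfolding wstar_def by simp

lemma dual_comb: "\<phi> \<in> dual \<tau> \<Longrightarrow> \<psi> \<in> dual \<tau> \<Longrightarrow> (\<lambda>z. a * \<phi> z + b * \<psi> z) \<in> dual \<tau>"
proof -
  assume p: "\<phi> \<in> dual \<tau>" and q: "\<psi> \<in> dual \<tau>"
  have lp: "linear \<phi>" "continuous_map \<tau> euclideanreal \<phi>" using p unfolding dual_def by auto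
  have lq: "linear \<psi>" "continuous_map \<tau> euclideanreal \<psi>" using q unfolding dual_def by auto
  have "linear (\<lambda>z. a * \<phi> z + b * \<psi> z)"
  proof (rule linearI)
    fix x y show "a * \<phi> (x + y) + b * \<psi> (x + y) = (a * \<phi> x + b * \<psi> x) + (a * \<phi> y + b * \<psi> y)"
      using linear_add[OF lp(1)] linear_add[OF lq(1)] by (simp add: algebra_simps)
  next
    fix c x show "a * \<phi> (c *\<^sub>R x) + b * \<psi> (c *\<^sub>R x) = c *\<^sub>R (a * \<phi> x + b * \<psi> x)"
      using linear_scale[OF lp(1)] linear_scale[OF lq(1)] by (simp add: algebra_simps)
  qed
  moreover have "continuous_map \<tau> euclideanreal (\<lambda>z. a * \<phi> z + b * \<psi> z)"
    by (intro continuous_map_add continuous_map_real_mult_left lp(2) lq(2))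
  ultimately show ?thesis unfolding dual_def by simp
qed

lemma fconvex_dual: "fconvex (dual \<tau>)"
  unfolding fconvex_def using dual_comb by blast

lemma clco_props:
  assumes "S \<subseteq> dual \<tau>"
  shows "wstar_clco \<tau> S \<subseteq> dual \<tau>" "closedin (wstar \<tau>) (wstar_clco \<tau> S)" "fconvex (wstar_clco \<tau> S)"
    "S \<subseteq> wstar_clco \<tau> S"
    "\<And>A. A \<subseteq> dual \<tau> \<Longrightarrow> closedin (wstar \<tau>) A \<Longrightarrow> fconvex A \<Longrightarrow> S \<subseteq> A \<Longrightarrow> wstar_clco \<tau> S \<subseteq> A"
proof -
  let ?F = "{A. A \<subseteq> dual \<tau> \<and> closedin (wstar \<tau>) A \<and> fconvex A \<and> S \<subseteq> A}"
  have dF: "dual \<tau> \<in> ?F" using assms fconvex_dual closedin_topspace[of "wstar \<tau>"] tw by simp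
  show "wstar_clco \<tau> S \<subseteq> dual \<tau>" unfolding wstar_clco_def using dF by blast
  show "closedin (wstar \<tau>) (wstar_clco \<tau> S)" unfolding wstar_clco_def
  proof (rule closedin_Inter)
    show "?F \<noteq> {}" using dF by blast
  next
    fix K assume "K \<in> ?F" thus "closedin (wstar \<tau>) K" by blast
  qed
  show "fconvex (wstar_clco \<tau> S)" unfolding fconvex_def[of "wstar_clco \<tau> S"]
  proof (intro ballI allI impI)
    fix \<phi> \<psi> u assume a: "\<phi> \<in> wstar_clco \<tau> S" "\<psi> \<in> wstar_clco \<tau> S" "0 \<le> (u::real) \<and> u \<le> 1"
    show "(\<lambda>z. u * \<phi> z + (1 - u) * \<psi> z) \<in> wstar_clco \<tau> S" unfolding wstar_clco_def
    proof (rule InterI)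
      fix A assume "A \<in> ?F"
      moreover have "\<phi> \<in> A" "\<psi> \<in> A" using a(1,2) \<open>A \<in> ?F\<close> unfolding wstar_clco_def by blast+
      ultimately show "(\<lambda>z. u * \<phi> z + (1 - u) * \<psi> z) \<in> A" using a(3) unfolding fconvex_def by blast
    qed
  qed
  show "S \<subseteq> wstar_clco \<tau> S" unfolding wstar_clco_def by blast
  show "\<And>A. A \<subseteq> dual \<tau> \<Longrightarrow> closedin (wstar \<tau>) A \<Longrightarrow> fconvex A \<Longrightarrow> S \<subseteq> A \<Longrightarrow> wstar_clco \<tau> S \<subseteq> A"
    unfolding wstar_clco_def by blast
qed

lemma half_closed: "closedin (wstar \<tau>) {\<psi> \<in> dual \<tau>. \<psi> w \<le> K}"
proof -
  have "closedin (product_topology (\<lambda>_. euclideanreal) UNIV)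
      {\<psi> \<in> topspace (product_topology (\<lambda>_. euclideanreal) UNIV). \<psi> w \<in> {..K}}"
    by (rule closedin_continuous_map_preimage[OF continuous_map_product_projection]) auto
  moreover have "{\<psi> \<in> dual \<tau>. \<psi> w \<le> K} =
      {\<psi> \<in> topspace (product_topology (\<lambda>_. euclideanreal) UNIV). \<psi> w \<in> {..K}} \<inter> dual \<tau>" by auto
  ultimately show ?thesis unfolding wstar_def closedin_subtopology by blast
qed

lemma half_fconvex: "fconvex {\<psi> \<in> dual \<tau>. \<psi> w \<le> K}"
  unfolding fconvex_def
proof (intro ballI allI impI)
  fix \<phi> \<psi> u assume p: "\<phi> \<in> {\<psi> \<in> dual \<tau>. \<psi> w \<le> K}" and q: "\<psi> \<in> {\<psi> \<in> dual \<tau>. \<psi> w \<le> K}"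
    and u: "0 \<le> (u::real) \<and> u \<le> 1"
  have "u * \<phi> w + (1 - u) * \<psi> w \<le> K" using p q u by (intro convex_bound_le) auto
  thus "(\<lambda>z. u * \<phi> z + (1 - u) * \<psi> z) \<in> {\<psi> \<in> dual \<tau>. \<psi> w \<le> K}"
    using dual_comb p q by simp
qed

end

context lcs_ctx begin

lemma main_result:
  fixes TT :: "'b topology" and F :: "'b \<Rightarrow> 'a \<Rightarrow> ereal" and x :: 'a
  assumes ne: "topspace TT \<noteq> {}"
    and Fp: "\<forall>t\<in>topspace TT. proper_fn (F t) \<and> convex_fn (F t) \<and> lsc_on \<tau> (F t)"
    and cpt: "compact_space TT"
    and usc: "\<forall>z. usc_on TT (\<lambda>t. F t z)"
    and xdom: "x \<in> edom (\<lambda>z. SUP t\<in>topspace TT. F t z)"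
    and lscx: "lsc_on TT (\<lambda>t. F t x)"
  shows "(INF t\<in>topspace TT. F t x) > -\<infinity> \<and>
    (\<forall>\<epsilon>>0. normal_cone \<tau> (edom (\<lambda>z. SUP t\<in>topspace TT. F t z)) x =
       recession_cone (wstar_clco \<tau> (\<Union>t\<in>topspace TT. eps_subdiff \<tau> \<epsilon> (F t) x)))"
proof -
  define T where "T = topspace TT"
  define f where "f z = (SUP t\<in>T. F t z)" for z
  have Tne: "T \<noteq> {}" using ne unfolding T_def .
  obtain t0 where t0: "t0 \<in> T" using Tne by blast
  have prp: "proper_fn (F t)" and cvf: "convex_fn (F t)" and lscF: "lsc_on \<tau> (F t)" if "t \<in> T" for t
    using Fp that unfolding T_def by auto
  have Ff: "F t z \<le> f z" if "t \<in> T" for t z unfolding f_def using that by (rule SUP_upper)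
  have fx: "f x < \<infinity>" using xdom unfolding edom_def f_def T_def by simp
  define gx where "gx t = real_of_ereal (F t x)" for t
  have Fx: "F t x = ereal (gx t)" if t: "t \<in> T" for t
  proof -
    have "F t x \<noteq> \<infinity>" using Ff[OF t, of x] fx by auto
    moreover have "F t x \<noteq> -\<infinity>" using prp[OF t] unfolding proper_fn_def by blast
    ultimately show ?thesis unfolding gx_def by (cases "F t x") auto
  qed
  have lsc_open: "openin TT {t \<in> T. F t x > ereal c}" for c
  proof -
    have "closedin TT {t \<in> topspace TT. F t x \<le> ereal c}" using lscx unfolding lsc_on_def by blast
    hence "openin TT (topspace TT - {t \<in> topspace TT. F t x \<le> ereal c})" unfolding closedin_def by blast
    moreover have "topspace TT - {t \<in> topspace TT. F t x \<le> ereal c} = {t \<in> T. F t x > ereal c}"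
      unfolding T_def by auto
    ultimately show ?thesis by simp
  qed
  have usc_open: "openin TT {t \<in> T. F t z < ereal c}" for z c
    using usc unfolding usc_on_def T_def by blast
  obtain m where m: "\<And>t. t \<in> T \<Longrightarrow> m < gx t"
  proof -
    define V where "V t = {s \<in> T. F s x > ereal (gx t - 1)}" for t
    have "\<forall>U\<in>V ` T. openin TT U" unfolding V_def using lsc_open by blast
    moreover have "topspace TT \<subseteq> \<Union>(V ` T)"
    proof
      fix s assume "s \<in> topspace TT"
      hence s: "s \<in> T" unfolding T_def .
      hence "s \<in> V s" unfolding V_def using Fx[OF s] by simp
      thus "s \<in> \<Union>(V ` T)" using s by blast
    qed
    ultimately obtain \<F> where \<F>: "finite \<F>" "\<F> \<subseteq> V ` T" "topspace TT \<subseteq> \<Union>\<F>"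
      using cpt unfolding compact_space_alt by meson
    obtain S where S: "S \<subseteq> T" "finite S" "\<F> = V ` S" using finite_subset_image[OF \<F>(1,2)] by blast
    have Sne: "S \<noteq> {}" using \<F>(3) S(3) Tne unfolding T_def by auto
    define m0 where "m0 = Min ((\<lambda>t. gx t - 1) ` S)"
    have "m0 < gx s" if s: "s \<in> T" for s
    proof -
      obtain t where t: "t \<in> S" "s \<in> V t" using \<F>(3) S(3) s unfolding T_def by blast
      have "m0 \<le> gx t - 1" unfolding m0_def using S(2) t(1) by simp
      moreover have "F s x > ereal (gx t - 1)" using t(2) unfolding V_def by simp
      hence "gx s > gx t - 1" using Fx[OF s] by simp
      ultimately show ?thesis by simp
    qed
    thus ?thesis using that by blast
  qed
  have part1: "(INF t\<in>topspace TT. F t x) > -\<infinity>"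
  proof -
    have "ereal m \<le> (INF t\<in>T. F t x)"
    proof (rule INF_greatest)
      fix t assume t: "t \<in> T" thus "ereal m \<le> F t x" using m[OF t] Fx[OF t] by simp
    qed
    moreover have "-\<infinity> < ereal m" by simp
    ultimately show ?thesis unfolding T_def by (rule order_less_le_trans[rotated])
  qed
  have fxr: "f x = ereal (real_of_ereal (f x))"
  proof -
    have "f x \<noteq> -\<infinity>" using Ff[OF t0, of x] Fx[OF t0] by auto
    thus ?thesis using fx by (cases "f x") auto
  qed
  define fxv where "fxv = real_of_ereal (f x)"
  have fxv: "f x = ereal fxv" using fxr unfolding fxv_def .
  have gxle: "gx t \<le> fxv" if t: "t \<in> T" for t
  proof -
    have "ereal (gx t) \<le> f x" using Ff[OF t, of x] Fx[OF t] by simp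
    thus ?thesis unfolding fxv by simp
  qed
  have part2: "normal_cone \<tau> (edom f) x = recession_cone (wstar_clco \<tau> (\<Union>t\<in>T. eps_subdiff \<tau> \<epsilon> (F t) x))"
    if eps: "\<epsilon> > 0" for \<epsilon>
  proof -
    define S where "S = (\<Union>t\<in>T. eps_subdiff \<tau> \<epsilon> (F t) x)"
    define C where "C = wstar_clco \<tau> S"
    have Sd: "S \<subseteq> dual \<tau>" unfolding S_def eps_subdiff_def by auto
    note Cp = clco_props[OF Sd, folded C_def]
    have Sne: "\<exists>y0. y0 \<in> C"
    proof -
      have "\<exists>s\<in>eps_subdiff \<tau> \<epsilon> (F t0) x. s 0 > 0 - 1"
      proof (rule dir_subgrad[OF prp[OF t0] cvf[OF t0] lscF[OF t0] Fx[OF t0] eps])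
        fix l :: real assume "l > 0"
        show "F t0 (x + l *\<^sub>R 0) \<ge> ereal (gx t0 - \<epsilon>/2 + 0 * l)" using Fx[OF t0] eps by simp
      qed
      then obtain s where "s \<in> eps_subdiff \<tau> \<epsilon> (F t0) x" by blast
      hence "s \<in> S" unfolding S_def using t0 by blast
      thus ?thesis using Cp(4) by blast
    qed
    then obtain y0 where y0: "y0 \<in> C" by blast
    have "normal_cone \<tau> (edom f) x \<subseteq> recession_cone C"
    proof
      fix \<phi> assume "\<phi> \<in> normal_cone \<tau> (edom f) x"
      hence \<phi>d: "\<phi> \<in> dual \<tau>" and \<phi>N: "\<And>w. w \<in> edom f \<Longrightarrow> \<phi> (w - x) \<le> 0"
        unfolding normal_cone_def by auto
      show "\<phi> \<in> recession_cone C" unfolding recession_cone_def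
      proof (intro CollectI ballI allI impI)
        fix y l assume yC: "y \<in> C" and l: "(l::real) \<ge> 0"
        show "(\<lambda>z. y z + l * \<phi> z) \<in> C"
        proof (rule ccontr)
          assume qC: "(\<lambda>z. y z + l * \<phi> z) \<notin> C"
          have yd: "y \<in> dual \<tau>" using yC Cp(1) by blast
          have "(\<lambda>z. 1 * y z + l * \<phi> z) \<in> dual \<tau>" by (rule dual_comb[OF yd \<phi>d])
          hence qd: "(\<lambda>z. y z + l * \<phi> z) \<in> dual \<tau>" by simp
          obtain zz c where zc: "\<forall>\<psi>\<in>C. \<psi> zz \<le> c" "c < y zz + l * \<phi> zz"
            using wstar_sep[OF Cp(1) Cp(2) Cp(3) qd qC] by blast
          have "y zz \<le> c" using zc(1) yC by blast
          hence "l * \<phi> zz > 0" using zc(2) by simp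
          hence \<phi>pos: "\<phi> zz > 0" using l by (simp add: zero_less_mult_iff)
          define M where "M = c + 1"
          have exl: "\<exists>lam>0. F t (x + lam *\<^sub>R zz) < ereal (gx t - \<epsilon>/2 + M * lam)" if t: "t \<in> T" for t
          proof (rule ccontr)
            assume "\<not> ?thesis"
            hence H: "\<And>lam. lam > 0 \<Longrightarrow> F t (x + lam *\<^sub>R zz) \<ge> ereal (gx t - \<epsilon>/2 + M * lam)"
              by (meson not_less)
            obtain s where s: "s \<in> eps_subdiff \<tau> \<epsilon> (F t) x" "s zz > M - 1"
              using dir_subgrad[OF prp[OF t] cvf[OF t] lscF[OF t] Fx[OF t] eps H] by blast
            have "s \<in> C" using s(1) t Cp(4) unfolding S_def by blast
            hence "s zz \<le> c" using zc(1) by blast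
            thus False using s(2) unfolding M_def by simp
          qed
          define U where "U lam = {t \<in> T. F t (x + lam *\<^sub>R zz) < ereal (gx t - \<epsilon>/2 + M * lam)}" for lam
          have openU: "openin TT (U lam)" for lam
          proof (subst openin_subopen, intro ballI)
            fix t1 assume t1U: "t1 \<in> U lam"
            hence t1: "t1 \<in> T" "F t1 (x + lam *\<^sub>R zz) < ereal (gx t1 - \<epsilon>/2 + M * lam)" unfolding U_def by auto
            obtain r where r: "F t1 (x + lam *\<^sub>R zz) < ereal r" "ereal r < ereal (gx t1 - \<epsilon>/2 + M * lam)"
              using ereal_dense2[OF t1(2)] by blast
            define N where "N = {t \<in> T. F t (x + lam *\<^sub>R zz) < ereal r} \<inter> {t \<in> T. F t x > ereal (r + \<epsilon>/2 - M * lam)}"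
            have "openin TT N" unfolding N_def by (intro openin_Int usc_open lsc_open)
            moreover have "t1 \<in> N" unfolding N_def using t1 r Fx[OF t1(1)] by simp
            moreover have "N \<subseteq> U lam"
            proof
              fix t assume "t \<in> N"
              hence t: "t \<in> T" "F t (x + lam *\<^sub>R zz) < ereal r" "F t x > ereal (r + \<epsilon>/2 - M * lam)"
                unfolding N_def by auto
              have "r < gx t - \<epsilon>/2 + M * lam" using t(3) Fx[OF t(1)] by simp
              hence "F t (x + lam *\<^sub>R zz) < ereal (gx t - \<epsilon>/2 + M * lam)"
                using t(2) by (meson ereal_less_eq(3) less_imp_le order_less_le_trans)
              thus "t \<in> U lam" unfolding U_def using t(1) by simp
            qed
            ultimately show "\<exists>N. openin TT N \<and> t1 \<in> N \<and> N \<subseteq> U lam" by blast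
          qed
          have "\<forall>V\<in>U ` {0<..}. openin TT V" using openU by blast
          moreover have "topspace TT \<subseteq> \<Union>(U ` {0<..})"
          proof
            fix t assume "t \<in> topspace TT"
            hence t: "t \<in> T" unfolding T_def .
            then obtain lam where "lam > 0" "F t (x + lam *\<^sub>R zz) < ereal (gx t - \<epsilon>/2 + M * lam)"
              using exl by blast
            thus "t \<in> \<Union>(U ` {0<..})" unfolding U_def using t by auto
          qed
          ultimately obtain \<F> where \<F>: "finite \<F>" "\<F> \<subseteq> U ` {0<..}" "topspace TT \<subseteq> \<Union>\<F>"
            using cpt unfolding compact_space_alt by meson
          obtain \<Lambda> where \<Lambda>: "\<Lambda> \<subseteq> {0<..}" "finite \<Lambda>" "\<F> = U ` \<Lambda>"
            using finite_subset_image[OF \<F>(1,2)] by blast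
          have \<Lambda>ne: "\<Lambda> \<noteq> {}" using \<F>(3) \<Lambda>(3) Tne unfolding T_def by auto
          define \<mu> where "\<mu> = Min \<Lambda>"
          have \<mu>pos: "\<mu> > 0" unfolding \<mu>_def using \<Lambda> \<Lambda>ne by (subst Min_gr_iff) auto
          have \<mu>le: "\<mu> \<le> lam" if "lam \<in> \<Lambda>" for lam unfolding \<mu>_def using \<Lambda>(2) that by simp
          have bnd: "F t (x + \<mu> *\<^sub>R zz) \<le> ereal (fxv + \<bar>M\<bar> * \<mu>)" if t: "t \<in> T" for t
          proof -
            obtain lam where lam: "lam \<in> \<Lambda>" "t \<in> U lam" using \<F>(3) \<Lambda>(3) t unfolding T_def by blast
            have lpos: "lam > 0" using lam(1) \<Lambda>(1) by auto
            have Fl: "F t (x + lam *\<^sub>R zz) < ereal (gx t - \<epsilon>/2 + M * lam)" using lam(2) unfolding U_def by simp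
            have Mmu: "M * \<mu> \<le> \<bar>M\<bar> * \<mu>" using \<mu>pos by (intro mult_right_mono) auto
            show ?thesis
            proof (cases "\<mu> = lam")
              case True
              have "gx t - \<epsilon>/2 + M * lam \<le> fxv + \<bar>M\<bar> * \<mu>" using gxle[OF t] eps Mmu True by simp
              hence le2: "ereal (gx t - \<epsilon>/2 + M * lam) \<le> ereal (fxv + \<bar>M\<bar> * \<mu>)" by simp
              have "F t (x + lam *\<^sub>R zz) \<le> ereal (gx t - \<epsilon>/2 + M * lam)" using Fl by (rule less_imp_le)
              also note le2
              finally show ?thesis using True by simp
            next
              case False
              hence lt: "\<mu> < lam" using \<mu>le[OF lam(1)] by simp
              define \<theta> where "\<theta> = \<mu> / lam"
              have th: "0 < \<theta>" "\<theta> < 1" unfolding \<theta>_def using \<mu>pos lt lpos by auto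
              have thl: "\<theta> * lam = \<mu>" unfolding \<theta>_def using lpos by simp
              have vec: "\<theta> *\<^sub>R (x + lam *\<^sub>R zz) + (1 - \<theta>) *\<^sub>R x = x + \<mu> *\<^sub>R zz"
                using thl by (simp add: algebra_simps)
              have "F t (\<theta> *\<^sub>R (x + lam *\<^sub>R zz) + (1 - \<theta>) *\<^sub>R x)
                  \<le> ereal \<theta> * F t (x + lam *\<^sub>R zz) + ereal (1 - \<theta>) * F t x"
                using cvf[OF t] th unfolding convex_fn_def by blast
              also have "\<dots> \<le> ereal \<theta> * ereal (gx t - \<epsilon>/2 + M * lam) + ereal (1 - \<theta>) * ereal (gx t)"
                using Fl Fx[OF t] th by (intro add_mono ereal_mult_left_mono) auto
              also have "\<dots> = ereal (gx t - \<theta> * (\<epsilon>/2) + M * (\<theta> * lam))"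
                by (simp add: algebra_simps)
              also have "\<dots> \<le> ereal (fxv + \<bar>M\<bar> * \<mu>)"
              proof -
                have "\<theta> * (\<epsilon>/2) \<ge> 0" using th eps by simp
                thus ?thesis using gxle[OF t] Mmu thl by simp
              qed
              finally show ?thesis unfolding vec .
            qed
          qed
          have "f (x + \<mu> *\<^sub>R zz) \<le> ereal (fxv + \<bar>M\<bar> * \<mu>)"
            unfolding f_def by (rule SUP_least) (rule bnd)
          moreover have "ereal (fxv + \<bar>M\<bar> * \<mu>) < \<infinity>" by simp
          ultimately have "f (x + \<mu> *\<^sub>R zz) < \<infinity>" by (rule le_less_trans)
          hence "x + \<mu> *\<^sub>R zz \<in> edom f" unfolding edom_def by simp
          hence "\<phi> ((x + \<mu> *\<^sub>R zz) - x) \<le> 0" by (rule \<phi>N)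
          hence "\<mu> * \<phi> zz \<le> 0" using \<phi>d unfolding dual_def by (simp add: linear_scale)
          thus False using \<mu>pos \<phi>pos by (simp add: mult_le_0_iff)
        qed
      qed
    qed
    moreover have "recession_cone C \<subseteq> normal_cone \<tau> (edom f) x"
    proof
      fix d assume "d \<in> recession_cone C"
      hence dR: "\<And>y l. y \<in> C \<Longrightarrow> l \<ge> 0 \<Longrightarrow> (\<lambda>z. y z + l * d z) \<in> C"
        unfolding recession_cone_def by blast
      have y0d: "y0 \<in> dual \<tau>" using y0 Cp(1) by blast
      have "(\<lambda>z. y0 z + 1 * d z) \<in> C" by (rule dR[OF y0]) simp
      hence "(\<lambda>z. y0 z + 1 * d z) \<in> dual \<tau>" using Cp(1) by blast
      from dual_comb[OF this y0d, of 1 "-1"] have dd: "d \<in> dual \<tau>" by simp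
      have "d (w - x) \<le> 0" if w: "w \<in> edom f" for w
      proof (rule ccontr)
        assume dpos: "\<not> d (w - x) \<le> 0"
        have fw: "f w < \<infinity>" using w unfolding edom_def by simp
        have "f w \<noteq> -\<infinity>"
        proof -
          have "F t0 w \<noteq> -\<infinity>" using prp[OF t0] unfolding proper_fn_def by blast
          thus ?thesis using Ff[OF t0, of w] by auto
        qed
        then obtain fwv where fwv: "f w = ereal fwv" using fw by (cases "f w") auto
        define K where "K = fwv - m + \<epsilon>"
        define HS where "HS = {\<psi> \<in> dual \<tau>. \<psi> (w - x) \<le> K}"
        have SH: "S \<subseteq> HS"
        proof
          fix \<psi> assume "\<psi> \<in> S"
          then obtain t where t: "t \<in> T" "\<psi> \<in> eps_subdiff \<tau> \<epsilon> (F t) x" unfolding S_def by blast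
          have \<psi>d: "\<psi> \<in> dual \<tau>" and ineq: "F t w \<ge> F t x + ereal (\<psi> (w - x) - \<epsilon>)"
            using t(2) unfolding eps_subdiff_def by auto
          have "ereal (gx t + (\<psi> (w - x) - \<epsilon>)) \<le> ereal fwv"
            using ineq Fx[OF t(1)] Ff[OF t(1), of w] fwv by (metis order_trans plus_ereal.simps(1))
          hence "gx t + (\<psi> (w - x) - \<epsilon>) \<le> fwv" by simp
          hence "\<psi> (w - x) \<le> K" unfolding K_def using m[OF t(1)] by simp
          thus "\<psi> \<in> HS" unfolding HS_def using \<psi>d by simp
        qed
        have CH: "C \<subseteq> HS" unfolding HS_def
          by (rule Cp(5)) (use SH half_closed half_fconvex in \<open>auto simp: HS_def\<close>)
        have y0H: "y0 (w - x) \<le> K" using y0 CH unfolding HS_def by blast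
        define l where "l = (K - y0 (w - x) + 1) / d (w - x)"
        have l: "l \<ge> 0" unfolding l_def using y0H dpos by simp
        have "(\<lambda>z. y0 z + l * d z) \<in> HS" using dR[OF y0 l] CH by blast
        hence "y0 (w - x) + l * d (w - x) \<le> K" unfolding HS_def by simp
        moreover have "l * d (w - x) = K - y0 (w - x) + 1" unfolding l_def using dpos by simp
        ultimately show False by simp
      qed
      thus "d \<in> normal_cone \<tau> (edom f) x" unfolding normal_cone_def using dd by simp
    qed
    ultimately show ?thesis unfolding C_def S_def by blast
  qed
  show ?thesis using part1 part2 unfolding f_def T_def by simp
qed

end

theorem corollary3:
  fixes \<tau> :: "'a::real_vector topology"
    and TT :: "'b topology"
    and F :: "'b \<Rightarrow> 'a \<Rightarrow> ereal"
    and x :: 'a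
  assumes "lcs \<tau>"
    and "topspace TT \<noteq> {}"
    and "\<forall>t\<in>topspace TT. proper_fn (F t) \<and> convex_fn (F t) \<and> lsc_on \<tau> (F t)"
    and "compact_space TT" and "Hausdorff_space TT"
    and "\<forall>z. usc_on TT (\<lambda>t. F t z)"
    and "x \<in> edom (\<lambda>z. SUP t\<in>topspace TT. F t z)"
    and "lsc_on TT (\<lambda>t. F t x)"
  shows "(INF t\<in>topspace TT. F t x) > -\<infinity> \<and>
    (\<forall>\<epsilon>>0. normal_cone \<tau> (edom (\<lambda>z. SUP t\<in>topspace TT. F t z)) x =
       recession_cone (wstar_clco \<tau> (\<Union>t\<in>topspace TT. eps_subdiff \<tau> \<epsilon> (F t) x)))"
proof -
  interpret lcs_ctx \<tau> using assms(1) by unfold_locales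
  show ?thesis by (rule main_result[OF assms(2) assms(3) assms(4) assms(6) assms(7) assms(8)])
qed

end
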